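(* Let $X_0\sim\mathcal D$ be a ghost context independent of all randomness of the interaction and of Algorithm 1. Then there is a universal constant $L'>0$ such that $$\mathbb E\Big[\sum_{t=1}^T(\beta'_{t+1}-\beta'_t)H(\bar A_{t+1}(X_0))\Big]\le L'\,c_1\sqrt{m\ln(K/m)}\sqrt{\sum_{t=1}^T\mathbb E\big[H(\bar A_t(X_0))\big]}.$$
   Context: Fix integers $K\ge2$, $1\le m<K$, $d\ge1$ and a horizon $T\ge3$. Let $\mathcal A=\{A\in\{0,1\}^K:\sum_{k=1}^K(A)_k\le m\}$, where $(A)_k$ denotes the $k$-th coordinate, and let $\mathrm{conv}(\mathcal A)$ be its convex hull. Contexts are drawn i.i.d. from a distribution $\mathcal D$ on $\mathbb R^d$ with $\|X\|_2\le1$ almost surely and $\Sigma=\mathbb E[XX^\top]\succ0$; $\lambda_{\min}(\Sigma)$ is its smallest eigenvalue. Protocol: in each round $t=1,\dots,T$ the environment fixes vectors $\theta_{t,1},\dots,\theta_{t,K}\in\mathbb R^d$ with $\|\theta_{t,k}\|_2\le1$ (not depending on the learner's actions), a context $X_t\sim\mathcal D$ is drawn independently of the past, the learner observes $X_t$, plays $A_t\in\mathcal A$, suffers $\sum_k\ell_t(X_t,k)(A_t)_k$ and observes $\ell_t(X_t,k)$ for every $k$ with $(A_t)_k=1$; all losses satisfy $\ell_t(x,k)\in[-1,1]$. Let $\mathcal F_t=\sigma(X_1,A_1,\dots,X_t,A_t)$ and $H(a)=-\sum_{k=1}^K a_k\ln a_k$ (with $0\ln 0=0$) for $a\in\mathrm{conv}(\mathcal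 A)$. Parameters: $c_1=\sqrt{(d+\ln T/\lambda_{\min}(\Sigma))K\ln T/(m\ln(K/m))}$, assumed $\ge1$; $c_2=8K/\lambda_{\min}(\Sigma)$; $\beta'_1=c_1$ and $\beta'_{t+1}=\beta'_t+c_1\big(1+(m\ln(K/m))^{-1}\sum_{s=1}^tH(\bar A_s(X_s))\big)^{-1/2}$; $\beta_t=\max\{2,c_2\ln T,\beta'_t\}$; $\eta_t=1/\beta_t$; $\alpha_t=4K\ln(t)/\lambda_{\min}(\Sigma)$; $\gamma_t=\alpha_t\eta_t$; $M_t=\lceil 4K\ln(t)/(\gamma_t\lambda_{\min}(\Sigma))\rceil=\lceil 1/\eta_t\rceil$ (the latter expression also used at $t=1$); $E=\{e_1,\dots,e_K\}\subseteq\mathcal A$ the standard basis vectors. Algorithm 1: set $\tilde\theta_{0,k}=0$. In round $t$: for a context $x$ let $\bar A_t(x)\in\arg\min_{a\in\mathrm{conv}(\mathcal A)}\{\sum_{s=1}^{t-1}\sum_{k}\langle x,\tilde\theta_{s,k}\rangle a_k-H(a)/\eta_t\}$; let $p_t(\cdot|x)$ be any distribution on $\mathcal A$ with $\sum_a p_t(a|x)\,a=\bar A_t(x)$; let $\pi_t(a|x)=(1-\gamma_t)p_t(a|x)+\gamma_t\mathbf 1[a\in E]/K$; sample $A_t\sim\pi_t(\cdot|X_t)$. Then draw $M_t$ fresh independent pairs $X(n)\sim\mathcal D$, $A(n)\sim\pi_t(\cdot|X(n))$, set $C_{n,k}=\prod_{j=1}^n\big(I-(A(j))_kX(j)X(j)^\top/2\big)$,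 $\widehat\Sigma^+_{t,k}=\big(I+\sum_{n=1}^{M_t}C_{n,k}\big)/2$, and $\tilde\theta_{t,k}=\widehat\Sigma^+_{t,k}X_t\,\ell_t(X_t,k)(A_t)_k$ for all $k\in[K]$. *)

theory Defs
  imports "HOL-Probability.Probability"
begin

text \<open>Explicit carriers: a context in R^d is a function nat => real of which only the
coordinates i < d matter (the context distribution lives on the finite product space
PiM {..<d}); matrices are nat => nat => real indexed by i,j < d; arms are 0..K-1; an
action is a subset S of {..<K} with card S <= m (its 0/1 vector is avec S).\<close>

type_synonym ctx = "nat \<Rightarrow> real"
type_synonym rmat = "nat \<Rightarrow> nat \<Rightarrow> real"
type_synonym sample = "ctx \<times> nat set"
type_synonym hist = "(ctx \<times> (nat \<Rightarrow> ctx)) list"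
  \<comment> \<open>entry s-1 of a history is the pair (X_s, k \<mapsto> tilde theta_{s,k})\<close>

definition ip :: "nat \<Rightarrow> ctx \<Rightarrow> ctx \<Rightarrow> real" where
  "ip d x y = (\<Sum>i<d. x i * y i)"

definition idm :: rmat where
  "idm = (\<lambda>i j. if i = j then 1 else 0)"

definition mmul :: "nat \<Rightarrow> rmat \<Rightarrow> rmat \<Rightarrow> rmat" where
  "mmul d A B = (\<lambda>i j. \<Sum>l<d. A i l * B l j)"

definition mvec :: "nat \<Rightarrow> rmat \<Rightarrow> ctx \<Rightarrow> ctx" where
  "mvec d A v = (\<lambda>i. \<Sum>j<d. A i j * v j)"

definition second_moment :: "ctx measure \<Rightarrow> rmat" where
  "second_moment D = (\<lambda>i j. \<integral>x. x i * x j \<partial>D)"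

definition posdef :: "nat \<Rightarrow> rmat \<Rightarrow> bool" where
  "posdef d S \<longleftrightarrow> (\<forall>v. (\<exists>i<d. v i \<noteq> 0) \<longrightarrow> (\<Sum>i<d. \<Sum>j<d. v i * S i j * v j) > 0)"

definition lambda_min :: "nat \<Rightarrow> rmat \<Rightarrow> real" where
  "lambda_min d S = Min {l. \<exists>v. (\<exists>i<d. v i \<noteq> 0) \<and> (\<forall>i<d. (\<Sum>j<d. S i j * v j) = l * v i)}"

definition acts :: "nat \<Rightarrow> nat \<Rightarrow> nat set set" where
  "acts K m = {S. S \<subseteq> {..<K} \<and> card S \<le> m}"

definition avec :: "nat set \<Rightarrow> nat \<Rightarrow> real" where
  "avec S = (\<lambda>k. if k \<in> S then 1 else 0)"

definition convA :: "nat \<Rightarrow> nat \<Rightarrow> (nat \<Rightarrow> real) set" where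
  "convA K m = {a. \<exists>w. (\<forall>S\<in>acts K m. 0 \<le> w S) \<and> (\<Sum>S\<in>acts K m. w S) = 1 \<and>
                     a = (\<lambda>k. \<Sum>S\<in>acts K m. w S * avec S k)}"

definition basisE :: "nat \<Rightarrow> nat set set" where
  "basisE K = (\<lambda>k. {k}) ` {..<K}"

definition ent :: "nat \<Rightarrow> (nat \<Rightarrow> real) \<Rightarrow> real" where
  "ent K a = - (\<Sum>k<K. if a k = 0 then 0 else a k * ln (a k))"

text \<open>FTRL objective; th is the list tilde theta_1, ..., tilde theta_{t-1}\<close>
definition objf :: "nat \<Rightarrow> nat \<Rightarrow> real \<Rightarrow> (nat \<Rightarrow> ctx) list \<Rightarrow> ctx \<Rightarrow> (nat \<Rightarrow> real) \<Rightarrow> real" where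
  "objf K d \<eta> th x a = (\<Sum>s<length th. \<Sum>k<K. ip d x ((th ! s) k) * a k) - ent K a / \<eta>"

definition Abar :: "nat \<Rightarrow> nat \<Rightarrow> nat \<Rightarrow> real \<Rightarrow> (nat \<Rightarrow> ctx) list \<Rightarrow> ctx \<Rightarrow> (nat \<Rightarrow> real)" where
  "Abar K m d \<eta> th x = (SOME a. a \<in> convA K m \<and> (\<forall>b\<in>convA K m. objf K d \<eta> th x a \<le> objf K d \<eta> th x b))"

definition lmin :: "ctx measure \<Rightarrow> nat \<Rightarrow> real" where
  "lmin D d = lambda_min d (second_moment D)"

definition cc1 :: "ctx measure \<Rightarrow> nat \<Rightarrow> nat \<Rightarrow> nat \<Rightarrow> nat \<Rightarrow> real" where
  "cc1 D d K m T = sqrt ((real d + ln (real T) / lmin D d) * real K * ln (real T)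
                        / (real m * ln (real K / real m)))"

definition cc2 :: "ctx measure \<Rightarrow> nat \<Rightarrow> nat \<Rightarrow> real" where
  "cc2 D d K = 8 * real K / lmin D d"

text \<open>bp t = (beta'_{t+1}, S_t) with S_t = sum_{s=1}^t H(Abar_s(X_s))\<close>
primrec bp :: "ctx measure \<Rightarrow> nat \<Rightarrow> nat \<Rightarrow> nat \<Rightarrow> nat \<Rightarrow> hist \<Rightarrow> nat \<Rightarrow> real \<times> real" where
  "bp D d K m T h 0 = (cc1 D d K m T, 0)"
| "bp D d K m T h (Suc t) =
    (let b = fst (bp D d K m T h t);
         S = snd (bp D d K m T h t);
         \<eta> = 1 / max (max 2 (cc2 D d K * ln (real T))) b;
         a = Abar K m d \<eta> (map snd (take t h)) (fst (h ! t));
         S' = S + ent K a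
     in (b + cc1 D d K m T / sqrt (1 + S' / (real m * ln (real K / real m))), S'))"

definition betap :: "ctx measure \<Rightarrow> nat \<Rightarrow> nat \<Rightarrow> nat \<Rightarrow> nat \<Rightarrow> hist \<Rightarrow> nat \<Rightarrow> real" where
  "betap D d K m T h t = fst (bp D d K m T h (t - 1))"

definition beta :: "ctx measure \<Rightarrow> nat \<Rightarrow> nat \<Rightarrow> nat \<Rightarrow> nat \<Rightarrow> hist \<Rightarrow> nat \<Rightarrow> real" where
  "beta D d K m T h t = max (max 2 (cc2 D d K * ln (real T))) (betap D d K m T h t)"

definition eta :: "ctx measure \<Rightarrow> nat \<Rightarrow> nat \<Rightarrow> nat \<Rightarrow> nat \<Rightarrow> hist \<Rightarrow> nat \<Rightarrow> real" where
  "eta D d K m T h t = 1 / beta D d K m T h t"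

definition Abar_t :: "ctx measure \<Rightarrow> nat \<Rightarrow> nat \<Rightarrow> nat \<Rightarrow> nat \<Rightarrow> hist \<Rightarrow> nat \<Rightarrow> ctx \<Rightarrow> (nat \<Rightarrow> real)" where
  "Abar_t D d K m T h t x = Abar K m d (eta D d K m T h t) (map snd (take (t - 1) h)) x"

definition gam :: "ctx measure \<Rightarrow> nat \<Rightarrow> nat \<Rightarrow> nat \<Rightarrow> nat \<Rightarrow> hist \<Rightarrow> nat \<Rightarrow> real" where
  "gam D d K m T h t = (4 * real K * ln (real t) / lmin D d) * eta D d K m T h t"

definition Mt :: "ctx measure \<Rightarrow> nat \<Rightarrow> nat \<Rightarrow> nat \<Rightarrow> nat \<Rightarrow> hist \<Rightarrow> nat \<Rightarrow> nat" where
  "Mt D d K m T h t = nat \<lceil>1 / eta D d K m T h t\<rceil>"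

text \<open>pi_t(.|x) = (1-gamma_t) p_t(.|x) + gamma_t Unif(E); p t a is the chosen distribution
  on actions with mean a (here a = Abar_t(x))\<close>
definition pol :: "ctx measure \<Rightarrow> nat \<Rightarrow> nat \<Rightarrow> nat \<Rightarrow> nat \<Rightarrow> (nat \<Rightarrow> (nat \<Rightarrow> real) \<Rightarrow> nat set pmf)
                   \<Rightarrow> hist \<Rightarrow> nat \<Rightarrow> ctx \<Rightarrow> nat set pmf" where
  "pol D d K m T p h t x = bind_pmf (bernoulli_pmf (gam D d K m T h t))
      (\<lambda>b. if b then pmf_of_set (basisE K) else p t (Abar_t D d K m T h t x))"

text \<open>C_{n,k} for the first n samples (product taken in the order j = 1..n)\<close>
definition Cmat :: "nat \<Rightarrow> nat \<Rightarrow> sample list \<Rightarrow> rmat" where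
  "Cmat d k ys = foldl (\<lambda>C (x, S). mmul d C (\<lambda>i j. idm i j - avec S k * x i * x j / 2)) idm ys"

definition Sigplus :: "nat \<Rightarrow> nat \<Rightarrow> sample list \<Rightarrow> rmat" where
  "Sigplus d k ys = (\<lambda>i j. (idm i j + (\<Sum>n\<in>{1..length ys}. Cmat d k (take n ys) i j)) / 2)"

definition theta_est :: "nat \<Rightarrow> (nat \<Rightarrow> ctx \<Rightarrow> nat \<Rightarrow> real) \<Rightarrow> nat \<Rightarrow> ctx \<Rightarrow> nat set
                          \<Rightarrow> sample list \<Rightarrow> (nat \<Rightarrow> ctx)" where
  "theta_est d loss t x A ys = (\<lambda>k. mvec d (Sigplus d k ys) (\<lambda>i. loss t x k * avec A k * x i))"

text \<open>Expectation of G over n i.i.d. pairs (X(j), A(j)), X(j) ~ D, A(j) ~ Q(X(j)), listed as j = 1..n\<close>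
primrec samp :: "ctx measure \<Rightarrow> (ctx \<Rightarrow> nat set pmf) \<Rightarrow> nat \<Rightarrow> (sample list \<Rightarrow> ennreal) \<Rightarrow> ennreal" where
  "samp D Q 0 G = G []"
| "samp D Q (Suc n) G =
     (\<integral>\<^sup>+ x. (\<integral>\<^sup>+ A. samp D Q n (\<lambda>ys. G ((x, A) # ys)) \<partial>measure_pmf (Q x)) \<partial>D)"

text \<open>Expectation of a functional F of the history after n further rounds of Algorithm 1,
  starting from history h (round t = length h + 1 is played next)\<close>
primrec run :: "ctx measure \<Rightarrow> nat \<Rightarrow> nat \<Rightarrow> nat \<Rightarrow> nat \<Rightarrow> (nat \<Rightarrow> ctx \<Rightarrow> nat \<Rightarrow> real)
                 \<Rightarrow> (nat \<Rightarrow> (nat \<Rightarrow> real) \<Rightarrow> nat set pmf) \<Rightarrow> nat \<Rightarrow> hist \<Rightarrow> (hist \<Rightarrow> ennreal) \<Rightarrow> ennreal" where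
  "run D d K m T loss p 0 h F = F h"
| "run D d K m T loss p (Suc n) h F =
     (let t = Suc (length h) in
      \<integral>\<^sup>+ x. (\<integral>\<^sup>+ A. samp D (pol D d K m T p h t) (Mt D d K m T h t)
                (\<lambda>ys. run D d K m T loss p n (h @ [(x, theta_est d loss t x A ys)]) F)
             \<partial>measure_pmf (pol D d K m T p h t x)) \<partial>D)"

definition context_dist :: "nat \<Rightarrow> ctx measure \<Rightarrow> bool" where
  "context_dist d D \<longleftrightarrow> prob_space D \<and> sets D = sets (\<Pi>\<^sub>M i\<in>{..<d}. lborel)
     \<and> (AE x in D. ip d x x \<le> 1) \<and> posdef d (second_moment D)"

definition losses_ok :: "nat \<Rightarrow> nat \<Rightarrow> (nat \<Rightarrow> ctx \<Rightarrow> nat \<Rightarrow> real) \<Rightarrow> bool" where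
  "losses_ok d K loss \<longleftrightarrow> (\<forall>t x k. \<bar>loss t x k\<bar> \<le> 1)
     \<and> (\<forall>t k. (\<lambda>x. loss t x k) \<in> borel_measurable (\<Pi>\<^sub>M i\<in>{..<d}. lborel))"

definition decomp_ok :: "nat \<Rightarrow> nat \<Rightarrow> (nat \<Rightarrow> (nat \<Rightarrow> real) \<Rightarrow> nat set pmf) \<Rightarrow> bool" where
  "decomp_ok K m p \<longleftrightarrow>
     (\<forall>t a. a \<in> convA K m \<longrightarrow> set_pmf (p t a) \<subseteq> acts K m \<and>
                (\<forall>k<K. (\<Sum>S\<in>acts K m. pmf (p t a) S * avec S k) = a k))
   \<and> (\<forall>t S. (\<lambda>a. pmf (p t a) S) \<in> borel_measurable (\<Pi>\<^sub>M i\<in>(UNIV::nat set). lborel))"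

end

theory Submission
  imports Defs "HOL-Real_Asymp.Real_Asymp"
begin

definition phi :: "real \<Rightarrow> real" where "phi x = (if x = 0 then 0 else x * ln x)"

lemma ent_phi: "ent K a = - (\<Sum>k<K. phi (a k))"
  unfolding ent_def phi_def by simp

lemma ln_strict: fixes t::real assumes "0 < t" "t \<noteq> 1" shows "ln t < t - 1"
proof -
  have s: "0 < sqrt t" using assms by simp
  have "ln t = 2 * ln (sqrt t)" using assms by (simp add: ln_sqrt)
  also have "\<dots> \<le> 2 * (sqrt t - 1)" using ln_le_minus_one[OF s] by simp
  also have "\<dots> < t - 1"
  proof -
    have "sqrt t \<noteq> 1" using assms by auto
    then have "0 < (sqrt t - 1)^2" by simp
    moreover have "(sqrt t - 1)^2 = t - 1 - 2 * (sqrt t - 1)" using assms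
      by (simp add: power2_eq_square algebra_simps)
    ultimately show ?thesis by simp
  qed
  finally show ?thesis .
qed

lemma phi_tangent: assumes "0 \<le> x" "0 < z"
  shows "phi x \<ge> phi z + (1 + ln z) * (x - z)" and "x \<noteq> z \<Longrightarrow> phi x > phi z + (1 + ln z) * (x - z)"
proof -
  have key: "phi x - phi z - (1 + ln z) * (x - z) \<ge> 0 \<and> (x \<noteq> z \<longrightarrow> phi x - phi z - (1 + ln z) * (x - z) > 0)"
  proof (cases "x = 0")
    case True
    then show ?thesis using assms by (simp add: phi_def algebra_simps)
  next
    case False
    then have xp: "x > 0" using assms by simp
    have eq: "phi x - phi z - (1 + ln z) * (x - z) = x * ( - ln (z / x)) - x + z"
      using xp assms by (simp add: phi_def ln_div algebra_simps)
    have "ln (z/x) \<le> z/x - 1" using ln_le_minus_one xp assms by simp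
    then have "x * (- ln (z/x)) \<ge> x * (1 - z/x)" using xp by (intro mult_left_mono) auto
    then have ge: "x * (- ln (z/x)) - x + z \<ge> 0" using xp by (simp add: algebra_simps)
    have gt: "x \<noteq> z \<longrightarrow> x * (- ln (z/x)) - x + z > 0"
    proof
      assume "x \<noteq> z"
      then have "z/x \<noteq> 1" using xp by auto
      then have "ln (z/x) < z/x - 1" by (rule ln_strict[rotated]) (use xp assms in simp)
      then have "x * (- ln (z/x)) > x * (1 - z/x)" using xp by (intro mult_strict_left_mono) auto
      then show "x * (- ln (z/x)) - x + z > 0" using xp by (simp add: algebra_simps)
    qed
    show ?thesis using eq ge gt by simp
  qed
  then show "phi x \<ge> phi z + (1 + ln z) * (x - z)" by simp
  show "x \<noteq> z \<Longrightarrow> phi x > phi z + (1 + ln z) * (x - z)" using key by simp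
qed

lemma phi_mid: assumes "0 \<le> x" "0 \<le> y"
  shows "phi ((x+y)/2) \<le> (phi x + phi y)/2" and "x \<noteq> y \<Longrightarrow> phi ((x+y)/2) < (phi x + phi y)/2"
proof -
  have r: "phi ((x+y)/2) \<le> (phi x + phi y)/2 \<and> (x \<noteq> y \<longrightarrow> phi ((x+y)/2) < (phi x + phi y)/2)"
  proof (cases "x + y = 0")
    case True then show ?thesis using assms by (simp add: phi_def)
  next
    case False
    define z where "z = (x+y)/2"
    have zp: "z > 0" using False assms z_def by simp
    note t1 = phi_tangent[OF assms(1) zp] and t2 = phi_tangent[OF assms(2) zp]
    have s: "(1 + ln z) * (x - z) + (1 + ln z) * (y - z) = 0" unfolding z_def by (simp add: algebra_simps)
    have "phi z \<le> (phi x + phi y)/2" using t1(1) t2(1) s by simp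
    moreover have "x \<noteq> y \<longrightarrow> phi z < (phi x + phi y)/2"
    proof
      assume "x \<noteq> y" then have "x \<noteq> z" unfolding z_def by simp
      then show "phi z < (phi x + phi y)/2" using t1(2) t2(1) s by simp
    qed
    ultimately show ?thesis unfolding z_def by simp
  qed
  then show "phi ((x+y)/2) \<le> (phi x + phi y)/2" "x \<noteq> y \<Longrightarrow> phi ((x+y)/2) < (phi x + phi y)/2" by auto
qed

lemma phi_cont: "continuous_on {0..} phi"
  unfolding continuous_on_def
proof (intro ballI)
  fix x :: real assume x: "x \<in> {0..}"
  show "(phi \<longlongrightarrow> phi x) (at x within {0..})"
  proof (cases "x = 0")
    case True
    have "at (0::real) within {0..} = at_right 0" by (simp add: at_within_Ici_at_right)
    moreover have "((\<lambda>y::real. y * ln y) \<longlongrightarrow> 0) (at_right 0)" by real_asymp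
    then have "(phi \<longlongrightarrow> 0) (at_right 0)"
      by (rule tendsto_cong[THEN iffD1, rotated]) (auto simp: phi_def eventually_at_right_less)
    ultimately show ?thesis using True by (simp add: phi_def)
  next
    case False
    then have xp: "x > 0" using x by simp
    have "isCont (\<lambda>y. y * ln y) x" using xp by (intro continuous_intros) auto
    then have "((\<lambda>y. y * ln y) \<longlongrightarrow> x * ln x) (at x)" by (simp add: isCont_def)
    moreover have ev: "\<forall>\<^sub>F y in at x. y * ln y = phi y"
      unfolding eventually_at using xp by (auto simp: phi_def dist_real_def intro!: exI[of _ x])
    ultimately have "(phi \<longlongrightarrow> phi x) (at x)" using tendsto_cong[OF ev] xp by (simp add: phi_def[abs_def])
    then show ?thesis by (rule tendsto_within_subset) simp
  qed
qed

lemma finite_acts: "finite (acts K m)"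
  by (rule finite_subset[of _ "Pow {..<K}"]) (auto simp: acts_def)

lemma avec_01: "0 \<le> avec S k" "avec S k \<le> 1" by (auto simp: avec_def)

lemma convA_bounds: assumes "a \<in> convA K m"
  shows "0 \<le> a k" "a k \<le> 1" "K \<le> k \<Longrightarrow> a k = 0"
proof -
  obtain w where w: "\<forall>S\<in>acts K m. 0 \<le> w S" "(\<Sum>S\<in>acts K m. w S) = 1"
    "a = (\<lambda>k. \<Sum>S\<in>acts K m. w S * avec S k)" using assms unfolding convA_def by blast
  show "0 \<le> a k" unfolding w(3) using w(1) by (auto intro!: sum_nonneg simp: avec_def)
  have "(\<Sum>S\<in>acts K m. w S * avec S k) \<le> (\<Sum>S\<in>acts K m. w S)"
    using w(1) by (intro sum_mono) (auto simp: avec_def)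
  then show "a k \<le> 1" using w by simp
  assume "K \<le> k"
  then have "\<forall>S\<in>acts K m. avec S k = 0" by (auto simp: acts_def avec_def)
  then show "a k = 0" unfolding w(3) by simp
qed

lemma convA_comb: assumes "a \<in> convA K m" "b \<in> convA K m" "0 \<le> s" "s \<le> 1"
  shows "(\<lambda>k. (1 - s) * a k + s * b k) \<in> convA K m"
proof -
  obtain w where w: "\<forall>S\<in>acts K m. 0 \<le> w S" "(\<Sum>S\<in>acts K m. w S) = 1"
    "a = (\<lambda>k. \<Sum>S\<in>acts K m. w S * avec S k)" using assms unfolding convA_def by blast
  obtain v where v: "\<forall>S\<in>acts K m. 0 \<le> v S" "(\<Sum>S\<in>acts K m. v S) = 1"
    "b = (\<lambda>k. \<Sum>S\<in>acts K m. v S * avec S k)" using assms unfolding convA_def by blast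
  show ?thesis unfolding convA_def
  proof (rule CollectI, rule exI[of _ "\<lambda>S. (1 - s) * w S + s * v S"], intro conjI ballI)
    fix S assume "S \<in> acts K m" then show "0 \<le> (1 - s) * w S + s * v S"
      using w v assms(3,4) by (intro add_nonneg_nonneg mult_nonneg_nonneg) auto
  next
    show "(\<Sum>S\<in>acts K m. (1 - s) * w S + s * v S) = 1"
      using w v by (simp add: sum.distrib sum_distrib_left[symmetric])
  next
    show "(\<lambda>k. (1 - s) * a k + s * b k) = (\<lambda>k. \<Sum>S\<in>acts K m. ((1 - s) * w S + s * v S) * avec S k)"
      unfolding w(3) v(3) by (simp add: sum.distrib sum_distrib_left distrib_right mult.assoc)
  qed
qed

lemma convA_avec: "S \<in> acts K m \<Longrightarrow> avec S \<in> convA K m"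
  unfolding convA_def
  by (rule CollectI, rule exI[of _ "\<lambda>T. if T = S then 1 else 0"])
     (auto simp: finite_acts if_distrib[of "\<lambda>x. x * _"] cong: if_cong)

lemma convA_compact: "compact (convA K m)"
proof -
  define A where "A = acts K m"
  define W where "W = (Pi\<^sub>E UNIV (\<lambda>S. if S \<in> A then {0..1::real} else {0})) \<inter> {w. sum w A = 1}"
  define L where "L = (\<lambda>w::nat set \<Rightarrow> real. (\<lambda>k. \<Sum>S\<in>A. w S * avec S k))"
  have c1: "compact (Pi\<^sub>E UNIV (\<lambda>S. if S \<in> A then {0..1::real} else {0}))"
  proof -
    have "compactin (product_topology (\<lambda>_. euclidean) UNIV) (Pi\<^sub>E UNIV (\<lambda>S. if S \<in> A then {0..1::real} else {0}))"
      by (subst compactin_PiE) (auto simp: compactin_euclidean_iff)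
    then show ?thesis by (simp add: euclidean_product_topology compactin_euclidean_iff)
  qed
  have c2: "closed {w::nat set \<Rightarrow> real. sum w A = 1}"
    by (rule closed_Collect_eq) (auto intro!: continuous_intros continuous_on_product_coordinates)
  have cW: "compact W" unfolding W_def using c1 c2 by (rule compact_Int_closed)
  have cL: "continuous_on UNIV L" unfolding L_def
    by (intro continuous_on_coordinatewise_then_product continuous_intros continuous_on_product_coordinates)
  have "convA K m = L ` W"
  proof
    show "L ` W \<subseteq> convA K m" unfolding W_def L_def convA_def A_def by (auto simp: PiE_def Pi_def)
    show "convA K m \<subseteq> L ` W"
    proof
      fix a assume "a \<in> convA K m"
      then obtain w where w: "\<forall>S\<in>A. 0 \<le> w S" "(\<Sum>S\<in>A. w S) = 1"
        "a = (\<lambda>k. \<Sum>S\<in>A. w S * avec S k)" unfolding convA_def A_def by blast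
      define w' where "w' = (\<lambda>S. if S \<in> A then w S else 0)"
      have le1: "w S \<le> 1" if "S \<in> A" for S
      proof -
        have "w S \<le> (\<Sum>S\<in>A. w S)" using w(1) that finite_acts[of K m] unfolding A_def
          by (intro member_le_sum) auto
        then show ?thesis using w(2) by simp
      qed
      have "w' \<in> W" unfolding W_def w'_def using w le1 by (auto simp: PiE_def Pi_def)
      moreover have "L w' = a" unfolding L_def w'_def w(3) by simp
      ultimately show "a \<in> L ` W" by blast
    qed
  qed
  then show ?thesis using compact_continuous_image[OF continuous_on_subset[OF cL] cW] by simp
qed

definition Fo :: "nat \<Rightarrow> real \<Rightarrow> (nat \<Rightarrow> real) \<Rightarrow> (nat \<Rightarrow> real) \<Rightarrow> real" where
  "Fo K B c a = (\<Sum>k<K. c k * a k) - B * ent K a"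

definition Psi :: "nat \<Rightarrow> nat \<Rightarrow> real \<Rightarrow> (nat \<Rightarrow> real) \<Rightarrow> (nat \<Rightarrow> real)" where
  "Psi K m B c = (SOME a. a \<in> convA K m \<and> (\<forall>b\<in>convA K m. Fo K B c a \<le> Fo K B c b))"

lemma empty_acts: "{} \<in> acts K m" by (simp add: acts_def)

lemma convA_ne: "convA K m \<noteq> {}" using convA_avec[OF empty_acts] by blast

lemma phi_coord_cont: "continuous_on (convA K m) (\<lambda>a. phi (a k))"
proof (rule continuous_on_compose2[OF phi_cont])
  show "continuous_on (convA K m) (\<lambda>a. a k)"
    by (rule continuous_on_subset[OF continuous_on_product_coordinates]) simp
  show "(\<lambda>a. a k) ` convA K m \<subseteq> {0..}" using convA_bounds by auto
qed

lemma Fo_cont: "continuous_on (convA K m) (Fo K B c)"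
  unfolding Fo_def[abs_def] ent_phi
  by (intro continuous_intros phi_coord_cont continuous_on_subset[OF continuous_on_product_coordinates]) auto

lemma Psi_min: "Psi K m B c \<in> convA K m \<and> (\<forall>b\<in>convA K m. Fo K B c (Psi K m B c) \<le> Fo K B c b)"
proof -
  have "\<exists>a\<in>convA K m. \<forall>b\<in>convA K m. Fo K B c a \<le> Fo K B c b"
    by (rule continuous_attains_inf[OF convA_compact convA_ne Fo_cont])
  then show ?thesis unfolding Psi_def by (rule someI_ex[where P="\<lambda>a. a \<in> convA K m \<and> (\<forall>b\<in>convA K m. Fo K B c a \<le> Fo K B c b)", OF bexE]) auto
qed

lemma ent_mid: assumes "a \<in> convA K m" "b \<in> convA K m"
  shows "ent K (\<lambda>k. (1 - 1/2) * a k + 1/2 * b k) \<ge> (ent K a + ent K b)/2"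
    and "a \<noteq> b \<Longrightarrow> ent K (\<lambda>k. (1 - 1/2) * a k + 1/2 * b k) > (ent K a + ent K b)/2"
proof -
  have mid: "(1 - 1/2) * x + 1/2 * y = (x + y)/2" for x y :: real by simp
  have pt: "phi ((a k + b k)/2) \<le> (phi (a k) + phi (b k))/2" for k
    using phi_mid(1) convA_bounds(1)[OF assms(1)] convA_bounds(1)[OF assms(2)] by blast
  have eq: "(ent K a + ent K b)/2 = - (\<Sum>k<K. (phi (a k) + phi (b k))/2)"
    unfolding ent_phi by (simp add: sum.distrib sum_divide_distrib[symmetric]) (simp add: field_simps)
  show "ent K (\<lambda>k. (1 - 1/2) * a k + 1/2 * b k) \<ge> (ent K a + ent K b)/2"
    unfolding eq unfolding ent_phi mid using pt by (simp add: sum_mono)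
  assume "a \<noteq> b"
  then obtain j where j: "a j \<noteq> b j" by auto
  have jK: "j < K" using j convA_bounds(3)[OF assms(1)] convA_bounds(3)[OF assms(2)] by (metis not_le)
  have ptj: "phi ((a j + b j)/2) < (phi (a j) + phi (b j))/2"
    using phi_mid(2) convA_bounds(1)[OF assms(1)] convA_bounds(1)[OF assms(2)] j by blast
  have "(\<Sum>k<K. phi ((a k + b k)/2)) < (\<Sum>k<K. (phi (a k) + phi (b k))/2)"
    by (rule sum_strict_mono_ex1) (use pt ptj jK in auto)
  then show "ent K (\<lambda>k. (1 - 1/2) * a k + 1/2 * b k) > (ent K a + ent K b)/2"
    unfolding eq unfolding ent_phi mid by simp
qed

lemma min_unique: assumes "0 < B" "a \<in> convA K m" "a' \<in> convA K m"
  "\<forall>b\<in>convA K m. Fo K B c a \<le> Fo K B c b" "\<forall>b\<in>convA K m. Fo K B c a' \<le> Fo K B c b"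
  shows "a = a'"
proof (rule ccontr)
  assume ne: "a \<noteq> a'"
  define z where "z = (\<lambda>k. (1 - 1/2) * a k + 1/2 * a' k)"
  have z: "z \<in> convA K m" unfolding z_def by (rule convA_comb) (use assms in auto)
  have eqF: "Fo K B c a = Fo K B c a'" using assms(2-5) by (meson antisym)
  have lin: "(\<Sum>k<K. c k * z k) = ((\<Sum>k<K. c k * a k) + (\<Sum>k<K. c k * a' k))/2"
    unfolding z_def by (simp add: sum.distrib sum_divide_distrib[symmetric] algebra_simps)
  have "ent K z > (ent K a + ent K a')/2" unfolding z_def by (rule ent_mid(2)[OF assms(2,3) ne])
  then have "B * ent K z > B * ((ent K a + ent K a')/2)" using assms(1) by simp
  then have "Fo K B c z < (Fo K B c a + Fo K B c a')/2" unfolding Fo_def lin by (simp add: field_simps)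
  then have "Fo K B c z < Fo K B c a" using eqF by simp
  then show False using assms(4) z by force
qed

lemma Psi_unique: assumes "0 < B" "a \<in> convA K m" "\<forall>b\<in>convA K m. Fo K B c a \<le> Fo K B c b"
  shows "Psi K m B c = a"
  using min_unique[OF assms(1) _ assms(2) _ assms(3)] Psi_min by blast

lemma fun_coord_tendsto: "((f :: nat \<Rightarrow> (nat \<Rightarrow> real)) \<longlongrightarrow> l) F \<Longrightarrow> ((\<lambda>n. f n k) \<longlongrightarrow> l k) F"
  by (rule continuous_on_tendsto_compose[OF continuous_on_product_coordinates]) auto

lemma Fo_tendsto:
  assumes "(Bs \<longlongrightarrow> B) F" "\<forall>k<K. ((\<lambda>n. cs n k) \<longlongrightarrow> c k) F"
    "\<forall>k<K. ((\<lambda>n. as n k) \<longlongrightarrow> a k) F" "\<forall>n. as n \<in> convA K m" "a \<in> convA K m"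
  shows "((\<lambda>n. Fo K (Bs n) (cs n) (as n)) \<longlongrightarrow> Fo K B c a) F"
proof -
  have ph: "((\<lambda>n. phi (as n k)) \<longlongrightarrow> phi (a k)) F" if "k < K" for k
  proof (rule continuous_on_tendsto_compose[OF phi_cont])
    show "((\<lambda>n. as n k) \<longlongrightarrow> a k) F" using assms(3) that by blast
    show "a k \<in> {0..}" using convA_bounds(1)[OF assms(5)] by simp
    have "\<forall>n. as n k \<in> {0..}" using convA_bounds(1) assms(4) by (simp add: atLeast_iff) blast
    then show "\<forall>\<^sub>F n in F. as n k \<in> {0..}" by (simp add: always_eventually)
  qed
  show ?thesis unfolding Fo_def ent_phi
    by (intro tendsto_intros) (use assms ph in auto)
qed

lemma Psi_seq:
  assumes Bs: "Bs \<longlonglongrightarrow> B" and cs: "\<forall>k<K. (\<lambda>n. cs n k) \<longlonglongrightarrow> c k" and B: "0 < B"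
  shows "(\<lambda>n. Psi K m (Bs n) (cs n) j) \<longlonglongrightarrow> Psi K m B c j"
proof (rule ccontr)
  define a where "a = (\<lambda>n. Psi K m (Bs n) (cs n))"
  define a0 where "a0 = Psi K m B c"
  assume "\<not> (\<lambda>n. Psi K m (Bs n) (cs n) j) \<longlonglongrightarrow> Psi K m B c j"
  then have "\<not> (\<lambda>n. a n j) \<longlonglongrightarrow> a0 j" unfolding a_def a0_def by simp
  then obtain e where e: "e > 0" "\<not> eventually (\<lambda>n. dist (a n j) (a0 j) < e) sequentially"
    unfolding tendsto_iff by blast
  define S where "S = {n. \<not> dist (a n j) (a0 j) < e}"
  have "infinite S" using e(2) unfolding S_def eventually_sequentially infinite_nat_iff_unbounded_le
    by (auto simp: not_le)
  then have r1: "strict_mono (enumerate S)" "\<And>n. enumerate S n \<in> S"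
    by (auto intro: strict_mono_enumerate enumerate_in_set)
  have inA: "\<And>n. a n \<in> convA K m" unfolding a_def using Psi_min by blast
  obtain l r2 where l: "l \<in> convA K m" "strict_mono r2" "((a \<circ> enumerate S) \<circ> r2) \<longlonglongrightarrow> l"
    by (rule seq_compactE[OF compact_imp_seq_compact[OF convA_compact], of "a \<circ> enumerate S"]) (use inA in auto)
  define r where "r = enumerate S \<circ> r2"
  have r: "strict_mono r" unfolding r_def using r1 l by (intro strict_mono_o)
  have al: "(\<lambda>n. a (r n)) \<longlonglongrightarrow> l" using l(3) unfolding r_def by (simp add: o_def)
  have alk: "(\<lambda>n. a (r n) k) \<longlonglongrightarrow> l k" for k using fun_coord_tendsto[OF al] .
  have Bsr: "(\<lambda>n. Bs (r n)) \<longlonglongrightarrow> B" using LIMSEQ_subseq_LIMSEQ[OF Bs r] by (simp add: o_def)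
  have csr: "\<forall>k<K. (\<lambda>n. cs (r n) k) \<longlonglongrightarrow> c k" proof (intro allI impI) fix k assume "k < K" then show "(\<lambda>n. cs (r n) k) \<longlonglongrightarrow> c k" using LIMSEQ_subseq_LIMSEQ[OF _ r, of "\<lambda>n. cs n k"] cs by (simp add: o_def) qed
  have lmin: "\<forall>b\<in>convA K m. Fo K B c l \<le> Fo K B c b"
  proof
    fix b assume b: "b \<in> convA K m"
    have t1: "((\<lambda>n. Fo K (Bs (r n)) (cs (r n)) (a (r n))) \<longlongrightarrow> Fo K B c l) sequentially"
      by (rule Fo_tendsto[OF Bsr csr _ _ l(1)]) (use alk inA in blast)+
    have t2: "((\<lambda>n. Fo K (Bs (r n)) (cs (r n)) b) \<longlongrightarrow> Fo K B c b) sequentially"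
      by (rule Fo_tendsto[OF Bsr csr _ _ b]) (use b in auto)
    have le: "Fo K (Bs (r n)) (cs (r n)) (a (r n)) \<le> Fo K (Bs (r n)) (cs (r n)) b" for n
      using Psi_min[of K m "Bs (r n)" "cs (r n)"] b unfolding a_def by blast
    show "Fo K B c l \<le> Fo K B c b"
      by (rule tendsto_le[OF _ t2 t1]) (simp_all add: le)
  qed
  have "l = a0" unfolding a0_def using Psi_unique[OF B l(1) lmin] by simp
  then have "(\<lambda>n. a (r n) j) \<longlonglongrightarrow> a0 j" using alk by simp
  then have "eventually (\<lambda>n. dist (a (r n) j) (a0 j) < e) sequentially" using e(1) unfolding tendsto_iff by blast
  then obtain n where "dist (a (r n) j) (a0 j) < e" by (auto simp: eventually_sequentially)
  moreover have "r n \<in> S" unfolding r_def using r1 by simp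
  ultimately show False unfolding S_def by simp
qed

definition rd :: "nat \<Rightarrow> real \<Rightarrow> real" where "rd n x = real_of_int \<lfloor>x * real (Suc n)\<rfloor> / real (Suc n)"

lemma rd_tendsto: "(\<lambda>n. rd n x) \<longlonglongrightarrow> x"
proof (rule tendsto_sandwich[of "\<lambda>n. x - 1 / real (Suc n)" _ _ "\<lambda>n. x"])
  show "\<forall>\<^sub>F n in sequentially. x - 1 / real (Suc n) \<le> rd n x"
  proof (intro always_eventually allI)
    fix n
    have "x * real (Suc n) - 1 \<le> real_of_int \<lfloor>x * real (Suc n)\<rfloor>" by linarith
    then have "(x * real (Suc n) - 1) / real (Suc n) \<le> rd n x" unfolding rd_def
      by (rule divide_right_mono) simp
    moreover have "(x * real (Suc n) - 1) / real (Suc n) = x - 1 / real (Suc n)"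
      by (simp add: diff_divide_distrib)
    ultimately show "x - 1 / real (Suc n) \<le> rd n x" by simp
  qed
  show "\<forall>\<^sub>F n in sequentially. rd n x \<le> x"
  proof (intro always_eventually allI)
    fix n
    have "real_of_int \<lfloor>x * real (Suc n)\<rfloor> \<le> x * real (Suc n)" by linarith
    then show "rd n x \<le> x" unfolding rd_def by (simp add: field_simps)
  qed
  show "(\<lambda>n. x) \<longlonglongrightarrow> x" by simp
  have "(\<lambda>n. 1 / real (Suc n)) \<longlonglongrightarrow> 0" using LIMSEQ_Suc[OF lim_inverse_n'] by simp
  then show "(\<lambda>n. x - 1 / real (Suc n)) \<longlonglongrightarrow> x" using tendsto_diff[of "\<lambda>n. x" x sequentially] by fastforce
qed

lemma Psi_restrict: "Psi K m B c = Psi K m B (\<lambda>k. if k < K then c k else 0)"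
  unfolding Psi_def Fo_def by simp

lemma meas_list_count: 
  assumes "\<And>k. k < K \<Longrightarrow> q k \<in> M \<rightarrow>\<^sub>M count_space (UNIV :: 'a::countable set)"
  shows "(\<lambda>\<omega>. map (\<lambda>k. q k \<omega>) [0..<K]) \<in> M \<rightarrow>\<^sub>M count_space UNIV"
  using assms
proof (induction K)
  case 0 then show ?case by simp
next
  case (Suc K)
  have h: "(\<lambda>\<omega>. map (\<lambda>k. q k \<omega>) [0..<K]) \<in> M \<rightarrow>\<^sub>M count_space UNIV" using Suc by simp
  have "(\<lambda>\<omega>. (\<lambda>l. l @ [q K \<omega>]) (map (\<lambda>k. q k \<omega>) [0..<K]) ) \<in> M \<rightarrow>\<^sub>M count_space UNIV"
  proof (rule measurable_compose_countable'[OF _ h])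
    fix l :: "'a list"
    show "(\<lambda>\<omega>. l @ [q K \<omega>]) \<in> M \<rightarrow>\<^sub>M count_space UNIV"
      by (rule measurable_compose[OF Suc.prems[of K]]) auto
  qed auto
  then show ?case by simp
qed

lemma Psi_measurable:
  assumes f: "f \<in> borel_measurable M" and fpos: "\<And>\<omega>. \<omega> \<in> space M \<Longrightarrow> 0 < f \<omega>"
    and g: "\<And>k. k < K \<Longrightarrow> (\<lambda>\<omega>. g \<omega> k) \<in> borel_measurable M"
  shows "(\<lambda>\<omega>. Psi K m (f \<omega>) (g \<omega>) j) \<in> borel_measurable M"
proof (rule borel_measurable_LIMSEQ_real[where u="\<lambda>n \<omega>. Psi K m (rd n (f \<omega>)) (\<lambda>k. if k < K then rd n (g \<omega> k) else 0) j"])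
  fix \<omega> assume w: "\<omega> \<in> space M"
  have "(\<lambda>n. Psi K m (rd n (f \<omega>)) (\<lambda>k. if k < K then rd n (g \<omega> k) else 0) j) \<longlonglongrightarrow>
        Psi K m (f \<omega>) (\<lambda>k. if k < K then g \<omega> k else 0) j"
    by (rule Psi_seq) (auto simp: rd_tendsto fpos[OF w])
  then show "(\<lambda>n. Psi K m (rd n (f \<omega>)) (\<lambda>k. if k < K then rd n (g \<omega> k) else 0) j) \<longlonglongrightarrow> Psi K m (f \<omega>) (g \<omega>) j"
    by (subst Psi_restrict) simp
next
  fix n
  define r where "r = real (Suc n)"
  define i where "i = (\<lambda>\<omega>. (\<lfloor>f \<omega> * r\<rfloor>, map (\<lambda>k. \<lfloor>g \<omega> k * r\<rfloor>) [0..<K]))"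
  define G where "G = (\<lambda>(z::int, l::int list). Psi K m (real_of_int z / r) (\<lambda>k. if k < K then real_of_int (l ! k) / r else 0) j)"
  have fl: "(\<lambda>\<omega>. \<lfloor>h \<omega>\<rfloor>) \<in> M \<rightarrow>\<^sub>M count_space UNIV" if "h \<in> borel_measurable M" for h :: "_ \<Rightarrow> real"
    by (rule measurable_compose[OF that measurable_real_floor])
  have im: "i \<in> M \<rightarrow>\<^sub>M count_space UNIV" unfolding i_def
  proof (rule measurable_compose_countable'[where f="\<lambda>z \<omega>. (z, map (\<lambda>k. \<lfloor>g \<omega> k * r\<rfloor>) [0..<K])"])
    fix z :: int
    have "(\<lambda>\<omega>. map (\<lambda>k. \<lfloor>g \<omega> k * r\<rfloor>) [0..<K]) \<in> M \<rightarrow>\<^sub>M count_space UNIV"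
      by (rule meas_list_count, rule fl) (use g in simp)
    then show "(\<lambda>\<omega>. (z, map (\<lambda>k. \<lfloor>g \<omega> k * r\<rfloor>) [0..<K])) \<in> M \<rightarrow>\<^sub>M count_space UNIV"
      by (rule measurable_compose) auto
    show "(\<lambda>\<omega>. \<lfloor>f \<omega> * r\<rfloor>) \<in> M \<rightarrow>\<^sub>M count_space UNIV" by (rule fl) (use f in simp)
  qed simp
  have "(\<lambda>\<omega>. G (i \<omega>)) \<in> borel_measurable M" by (rule measurable_compose[OF im]) simp
  moreover have "G (i \<omega>) = Psi K m (rd n (f \<omega>)) (\<lambda>k. if k < K then rd n (g \<omega> k) else 0) j" for \<omega>
    unfolding G_def i_def rd_def r_def by (auto intro!: arg_cong[where f="\<lambda>c. Psi K m _ c j"])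
  ultimately show "(\<lambda>\<omega>. Psi K m (rd n (f \<omega>)) (\<lambda>k. if k < K then rd n (g \<omega> k) else 0) j) \<in> borel_measurable M" by simp
qed

definition coordM :: "('a \<Rightarrow> real) set \<Rightarrow> 'a measure" where
  "coordM F = sigma UNIV {f -` B | f B. f \<in> F \<and> B \<in> sets borel}"

lemma coordM_space[simp]: "space (coordM F) = UNIV"
  unfolding coordM_def by (rule space_measure_of) auto

lemma coordM_sets: "sets (coordM F) = sigma_sets UNIV {f -` B | f B. f \<in> F \<and> B \<in> sets borel}"
  unfolding coordM_def by (rule sets_measure_of) auto

lemma coordM_coord: "f \<in> F \<Longrightarrow> f \<in> borel_measurable (coordM F)"
  unfolding measurable_def coordM_sets by (auto intro!: sigma_sets.Basic)

lemma coordM_into: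
  assumes "\<And>f. f \<in> F \<Longrightarrow> (\<lambda>\<omega>. f (g \<omega>)) \<in> borel_measurable M"
  shows "g \<in> M \<rightarrow>\<^sub>M coordM F"
  unfolding coordM_def
proof (rule measurable_measure_of)
  fix A assume "A \<in> {f -` B | f B. f \<in> F \<and> B \<in> sets borel}"
  then obtain f B where fB: "A = f -` B" "f \<in> F" "B \<in> sets borel" by blast
  have "(\<lambda>\<omega>. f (g \<omega>)) -` B \<inter> space M \<in> sets M" using assms[OF fB(2)] fB(3) by (rule measurable_sets)
  then show "g -` A \<inter> space M \<in> sets M" using fB(1) by (simp add: vimage_def)
qed auto

lemma nat_count_meas:
  assumes "(\<lambda>\<omega>. real (q \<omega>)) \<in> borel_measurable M"
  shows "q \<in> M \<rightarrow>\<^sub>M count_space UNIV"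
proof -
  have "(\<lambda>\<omega>. nat \<lfloor>real (q \<omega>)\<rfloor>) \<in> M \<rightarrow>\<^sub>M count_space UNIV"
    by (rule measurable_compose[OF measurable_compose[OF assms measurable_real_floor]]) auto
  then show ?thesis by simp
qed

definition HF :: "(hist \<Rightarrow> real) set" where
  "HF = {\<lambda>h. real (length h)} \<union> {\<lambda>h. fst (h!s) i | s i. True} \<union> {\<lambda>h. snd (h!s) k i | s k i. True}"
definition HM :: "hist measure" where "HM = coordM HF"

definition LF :: "(sample list \<Rightarrow> real) set" where
  "LF = {\<lambda>ys. real (length ys)} \<union> {\<lambda>ys. fst (ys!j) i | j i. True} \<union> {\<lambda>ys. if k \<in> snd (ys!j) then 1 else 0 | j k. True}"
definition LM :: "sample list measure" where "LM = coordM LF"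

lemma HM_space[simp]: "space HM = UNIV" and LM_space[simp]: "space LM = UNIV"
  by (simp_all add: HM_def LM_def)

lemma HM_len[measurable]: "(\<lambda>h. real (length h)) \<in> borel_measurable HM"
  unfolding HM_def by (rule coordM_coord) (auto simp: HF_def)
lemma HM_X[measurable]: "(\<lambda>h. fst (h!s) i) \<in> borel_measurable HM"
  unfolding HM_def by (rule coordM_coord) (auto simp: HF_def)
lemma HM_th[measurable]: "(\<lambda>h. snd (h!s) k i) \<in> borel_measurable HM"
  unfolding HM_def by (rule coordM_coord) (unfold HF_def, blast)
lemma LM_len[measurable]: "(\<lambda>ys. real (length ys)) \<in> borel_measurable LM"
  unfolding LM_def by (rule coordM_coord) (unfold LF_def, blast)
lemma LM_X[measurable]: "(\<lambda>ys. fst (ys!j) i) \<in> borel_measurable LM"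
  unfolding LM_def by (rule coordM_coord) (unfold LF_def, blast)
lemma LM_A[measurable]: "(\<lambda>ys. if k \<in> snd (ys!j) then 1 else 0 :: real) \<in> borel_measurable LM"
  unfolding LM_def by (rule coordM_coord) (unfold LF_def, blast)

lemma HM_length[measurable]: "length \<in> HM \<rightarrow>\<^sub>M count_space UNIV"
  by (rule nat_count_meas) (rule HM_len)
lemma LM_length[measurable]: "length \<in> LM \<rightarrow>\<^sub>M count_space UNIV"
  by (rule nat_count_meas) (rule LM_len)

lemma HM_into:
  assumes "(\<lambda>\<omega>. real (length (g \<omega>))) \<in> borel_measurable M"
    "\<And>s i. (\<lambda>\<omega>. fst (g \<omega> ! s) i) \<in> borel_measurable M"
    "\<And>s k i. (\<lambda>\<omega>. snd (g \<omega> ! s) k i) \<in> borel_measurable M"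
  shows "g \<in> M \<rightarrow>\<^sub>M HM"
  unfolding HM_def by (rule coordM_into) (auto simp: HF_def assms)

lemma LM_into:
  assumes "(\<lambda>\<omega>. real (length (g \<omega>))) \<in> borel_measurable M"
    "\<And>j i. (\<lambda>\<omega>. fst (g \<omega> ! j) i) \<in> borel_measurable M"
    "\<And>j k. (\<lambda>\<omega>. if k \<in> snd (g \<omega> ! j) then 1 else 0 :: real) \<in> borel_measurable M"
  shows "g \<in> M \<rightarrow>\<^sub>M LM"
  unfolding LM_def by (rule coordM_into) (auto simp: LF_def assms)

lemma D_coord:
  fixes D :: "ctx measure"
  assumes "sets D = sets (\<Pi>\<^sub>M i\<in>{..<d}. lborel)"
  shows "(\<lambda>x. x i) \<in> borel_measurable D"
proof -
  have sp: "space D = space (\<Pi>\<^sub>M i\<in>{..<d}. (lborel :: real measure))" using sets_eq_imp_space_eq[OF assms] .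
  have "(\<lambda>x. x i) \<in> borel_measurable (\<Pi>\<^sub>M i\<in>{..<d}. (lborel :: real measure))"
  proof (cases "i < d")
    case True
    then show ?thesis using measurable_component_singleton[of i "{..<d}" "\<lambda>_. lborel"]
      by (simp add: measurable_lborel1)
  next
    case False
    have "(\<lambda>x. undefined) \<in> borel_measurable (\<Pi>\<^sub>M i\<in>{..<d}. (lborel :: real measure))" by simp
    then show ?thesis by (rule measurable_cong[THEN iffD1, rotated]) (use False in \<open>auto simp: space_PiM PiE_def extensional_def\<close>)
  qed
  then show ?thesis by (subst measurable_cong_sets[OF assms refl])
qed

lemma loss_D:
  fixes D :: "ctx measure"
  assumes "sets D = sets (\<Pi>\<^sub>M i\<in>{..<d}. lborel)" "losses_ok d K loss"
  shows "(\<lambda>x. loss t x k) \<in> borel_measurable D"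
proof -
  have "(\<lambda>x. loss t x k) \<in> borel_measurable (\<Pi>\<^sub>M i\<in>{..<d}. lborel)" using assms(2) unfolding losses_ok_def by blast
  then show ?thesis by (subst measurable_cong_sets[OF assms(1) refl])
qed

definition coef :: "nat \<Rightarrow> (nat \<Rightarrow> ctx) list \<Rightarrow> ctx \<Rightarrow> nat \<Rightarrow> real" where
  "coef d th x k = (\<Sum>s<length th. ip d x ((th!s) k))"

lemma Abar_Psi: "0 < \<eta> \<Longrightarrow> Abar K m d \<eta> th x = Psi K m (1/\<eta>) (coef d th x)"
proof -
  assume "0 < \<eta>"
  have "objf K d \<eta> th x a = Fo K (1/\<eta>) (coef d th x) a" for a
    unfolding objf_def Fo_def coef_def by (simp add: sum.swap[of _ "{..<K}"] sum_distrib_right)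
  then show ?thesis unfolding Abar_def Psi_def by simp
qed

lemma sum_min: "(\<Sum>s<min l t. f s) = (\<Sum>s<t. if s < l then f s else (0::real))" for t l :: nat
proof (induction t)
  case (Suc t)
  show ?case
  proof (cases "t < l")
    case True
    then have "min l (Suc t) = Suc (min l t)" by (simp add: min_def)
    then show ?thesis using Suc True by simp
  next
    case False
    then have "min l (Suc t) = min l t" by (simp add: min_def)
    then show ?thesis using Suc False by simp
  qed
qed simp

lemma coef_take: "coef d (map snd (take t h)) x k = (\<Sum>s<t. if s < length h then ip d x (snd (h!s) k) else 0)"
proof -
  have "coef d (map snd (take t h)) x k = (\<Sum>s<min (length h) t. ip d x (snd (h!s) k))"
    unfolding coef_def by (intro sum.cong) auto
  then show ?thesis by (simp add: sum_min)
qed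

lemma phi_meas[measurable]: "phi \<in> borel_measurable borel"
  unfolding phi_def[abs_def] by measurable

lemma meas_len_HM:
  assumes "H \<in> M \<rightarrow>\<^sub>M HM" shows "(\<lambda>\<omega>. length (H \<omega>)) \<in> M \<rightarrow>\<^sub>M count_space UNIV"
  using measurable_compose[OF assms HM_length] by simp

lemma meas_coef:
  assumes H: "H \<in> M \<rightarrow>\<^sub>M HM" and X: "\<And>i. (\<lambda>\<omega>. X \<omega> i) \<in> borel_measurable M"
  shows "(\<lambda>\<omega>. coef d (map snd (take t (H \<omega>))) (X \<omega>) k) \<in> borel_measurable M"
proof -
  have L: "(\<lambda>\<omega>. length (H \<omega>)) \<in> M \<rightarrow>\<^sub>M count_space UNIV" by (rule meas_len_HM[OF H])
  have th: "(\<lambda>\<omega>. snd (H \<omega> ! s) k i) \<in> borel_measurable M" for s i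
    using measurable_compose[OF H HM_th] by simp
  have ip: "(\<lambda>\<omega>. ip d (X \<omega>) (snd (H \<omega> ! s) k)) \<in> borel_measurable M" for s
    unfolding ip_def using X th by measurable
  have p: "Measurable.pred M (\<lambda>\<omega>. s < length (H \<omega>))" for s
    using L by measurable
  show ?thesis unfolding coef_take using ip p by measurable
qed

lemma ent_Psi_meas:
  assumes f: "f \<in> borel_measurable M" and fpos: "\<And>\<omega>. \<omega> \<in> space M \<Longrightarrow> 0 < f \<omega>"
    and g: "\<And>k. k < K \<Longrightarrow> (\<lambda>\<omega>. g \<omega> k) \<in> borel_measurable M"
  shows "(\<lambda>\<omega>. ent K (Psi K m (f \<omega>) (g \<omega>))) \<in> borel_measurable M"
proof -
  have "(\<lambda>\<omega>. phi (Psi K m (f \<omega>) (g \<omega>) k)) \<in> borel_measurable M" for k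
    using measurable_compose[OF Psi_measurable[OF f fpos g] phi_meas] by simp
  then show ?thesis unfolding ent_phi by measurable
qed

lemma bp_Suc_Psi: "bp D d K m T h (Suc t) =
   (let b = fst (bp D d K m T h t);
        S = snd (bp D d K m T h t);
        a = Psi K m (max (max 2 (cc2 D d K * ln (real T))) b) (coef d (map snd (take t h)) (fst (h ! t)));
        S' = S + ent K a
    in (b + cc1 D d K m T / sqrt (1 + S' / (real m * ln (real K / real m))), S'))"
proof -
  have p: "0 < 1 / max (max 2 (cc2 D d K * ln (real T))) (fst (bp D d K m T h t))" by simp
  show ?thesis unfolding bp.simps Let_def Abar_Psi[OF p] by simp
qed

lemma bp_meas:
  assumes H: "H \<in> M \<rightarrow>\<^sub>M HM"
  shows "(\<lambda>\<omega>. fst (bp D d K m T (H \<omega>) t)) \<in> borel_measurable M \<and> (\<lambda>\<omega>. snd (bp D d K m T (H \<omega>) t)) \<in> borel_measurable M"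
proof (induction t)
  case 0 then show ?case by simp
next
  case (Suc t)
  have b: "(\<lambda>\<omega>. fst (bp D d K m T (H \<omega>) t)) \<in> borel_measurable M" and S: "(\<lambda>\<omega>. snd (bp D d K m T (H \<omega>) t)) \<in> borel_measurable M"
    using Suc by auto
  have X: "(\<lambda>\<omega>. fst (H \<omega> ! t) i) \<in> borel_measurable M" for i using measurable_compose[OF H HM_X] by simp
  have e: "(\<lambda>\<omega>. ent K (Psi K m (max (max 2 (cc2 D d K * ln (real T))) (fst (bp D d K m T (H \<omega>) t)))
            (coef d (map snd (take t (H \<omega>))) (fst (H \<omega> ! t))))) \<in> borel_measurable M"
    by (rule ent_Psi_meas) (use b meas_coef[OF H X] in auto)
  show ?case unfolding bp_Suc_Psi Let_def using b S e by simp
qed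

lemma beta_pos: "0 < beta D d K m T h t" unfolding beta_def by simp

lemma Abar_t_Psi: "Abar_t D d K m T h t x = Psi K m (beta D d K m T h t) (coef d (map snd (take (t-1) h)) x)"
  unfolding Abar_t_def eta_def using Abar_Psi[of "1 / beta D d K m T h t"] beta_pos by simp

lemma beta_meas:
  assumes H: "H \<in> M \<rightarrow>\<^sub>M HM"
  shows "(\<lambda>\<omega>. beta D d K m T (H \<omega>) t) \<in> borel_measurable M"
proof -
  have "(\<lambda>\<omega>. fst (bp D d K m T (H \<omega>) (t-1))) \<in> borel_measurable M" using bp_meas[OF H] by blast
  then show ?thesis unfolding beta_def betap_def by (intro borel_measurable_max) simp_all
qed

lemma Abar_t_meas:
  assumes H: "H \<in> M \<rightarrow>\<^sub>M HM" and X: "\<And>i. (\<lambda>\<omega>. X \<omega> i) \<in> borel_measurable M"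
  shows "(\<lambda>\<omega>. Abar_t D d K m T (H \<omega>) t (X \<omega>) j) \<in> borel_measurable M"
  unfolding Abar_t_Psi by (rule Psi_measurable) (use beta_meas[OF H] beta_pos meas_coef[OF H X] in auto)

lemma ent_Abar_t_meas:
  assumes H: "H \<in> M \<rightarrow>\<^sub>M HM" and X: "\<And>i. (\<lambda>\<omega>. X \<omega> i) \<in> borel_measurable M"
  shows "(\<lambda>\<omega>. ent K (Abar_t D d K m T (H \<omega>) t (X \<omega>))) \<in> borel_measurable M"
  unfolding Abar_t_Psi by (rule ent_Psi_meas) (use beta_meas[OF H] beta_pos meas_coef[OF H X] in auto)

lemma Abar_t_PiM:
  assumes H: "H \<in> M \<rightarrow>\<^sub>M HM" and X: "\<And>i. (\<lambda>\<omega>. X \<omega> i) \<in> borel_measurable M"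
  shows "(\<lambda>\<omega>. Abar_t D d K m T (H \<omega>) t (X \<omega>)) \<in> M \<rightarrow>\<^sub>M (\<Pi>\<^sub>M i\<in>(UNIV::nat set). lborel)"
proof -
  have "(\<lambda>\<omega> j. Abar_t D d K m T (H \<omega>) t (X \<omega>) j) \<in> M \<rightarrow>\<^sub>M (\<Pi>\<^sub>M i\<in>(UNIV::nat set). lborel)"
    by (rule measurable_PiM_single') (use Abar_t_meas[OF H X] in \<open>auto simp: measurable_lborel2\<close>)
  then show ?thesis by simp
qed

lemma bern_clamp: "bernoulli_pmf p = bernoulli_pmf (min 1 (max 0 p))"
  by (rule pmf_eqI) (simp add: bernoulli_pmf.rep_eq)

lemma pmf_pol: "pmf (pol D d K m T p h t x) S =
   pmf (pmf_of_set (basisE K)) S * min 1 (max 0 (gam D d K m T h t)) +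
   pmf (p t (Abar_t D d K m T h t x)) S * (1 - min 1 (max 0 (gam D d K m T h t)))"
  unfolding pol_def by (subst bern_clamp) (simp add: pmf_bind)

lemma pol_meas:
  assumes H: "H \<in> M \<rightarrow>\<^sub>M HM" and X: "\<And>i. (\<lambda>\<omega>. X \<omega> i) \<in> borel_measurable M"
    and dec: "decomp_ok K m p"
  shows "(\<lambda>\<omega>. pmf (pol D d K m T p (H \<omega>) t (X \<omega>)) S) \<in> borel_measurable M"
proof -
  have pm: "(\<lambda>a. pmf (p t a) S) \<in> borel_measurable (\<Pi>\<^sub>M i\<in>(UNIV::nat set). lborel)"
    using dec unfolding decomp_ok_def by blast
  have 1: "(\<lambda>\<omega>. pmf (p t (Abar_t D d K m T (H \<omega>) t (X \<omega>))) S) \<in> borel_measurable M"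
    using measurable_compose[OF Abar_t_PiM[OF H X] pm] .
  have 2: "(\<lambda>\<omega>. gam D d K m T (H \<omega>) t) \<in> borel_measurable M"
    unfolding gam_def eta_def using beta_meas[OF H] by measurable
  show ?thesis unfolding pmf_pol using 1 2 by measurable
qed

lemma basisE_acts: "1 \<le> m \<Longrightarrow> basisE K \<subseteq> acts K m"
  unfolding basisE_def acts_def by auto

lemma Abar_t_convA: "Abar_t D d K m T h t x \<in> convA K m"
  unfolding Abar_t_Psi using Psi_min by blast

lemma pol_support:
  assumes "0 < K" "1 \<le> m" "decomp_ok K m p"
  shows "set_pmf (pol D d K m T p h t x) \<subseteq> acts K m"
proof -
  have fin: "finite (basisE K)" "basisE K \<noteq> {}" using assms(1) unfolding basisE_def by auto
  have a: "set_pmf (p t (Abar_t D d K m T h t x)) \<subseteq> acts K m"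
    using assms(3) Abar_t_convA unfolding decomp_ok_def by blast
  have b: "set_pmf (pmf_of_set (basisE K)) \<subseteq> acts K m"
    using set_pmf_of_set[OF fin(2,1)] basisE_acts[OF assms(2)] by simp
  show ?thesis unfolding pol_def set_bind_pmf using a b by (auto split: if_splits)
qed

lemma ceil_nat_meas:
  fixes f :: "_ \<Rightarrow> real"
  assumes "f \<in> borel_measurable M"
  shows "(\<lambda>\<omega>. nat \<lceil>f \<omega>\<rceil>) \<in> M \<rightarrow>\<^sub>M count_space UNIV"
proof (rule nat_count_meas)
  have "(\<lambda>\<omega>. real_of_int \<lfloor>- f \<omega>\<rfloor>) \<in> borel_measurable M"
    using measurable_compose[OF borel_measurable_uminus[OF assms] borel_measurable_real_floor] by simp
  then have "(\<lambda>\<omega>. max 0 (- real_of_int \<lfloor>- f \<omega>\<rfloor>)) \<in> borel_measurable M" by measurable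
  moreover have "real (nat \<lceil>f \<omega>\<rceil>) = max 0 (- real_of_int \<lfloor>- f \<omega>\<rfloor>)" for \<omega>
    by (simp add: ceiling_def)
  ultimately show "(\<lambda>\<omega>. real (nat \<lceil>f \<omega>\<rceil>)) \<in> borel_measurable M" by simp
qed

lemma Mt_meas:
  assumes H: "H \<in> M \<rightarrow>\<^sub>M HM"
  shows "(\<lambda>\<omega>. Mt D d K m T (H \<omega>) t) \<in> M \<rightarrow>\<^sub>M count_space UNIV"
  unfolding Mt_def eta_def by (rule ceil_nat_meas) (use beta_meas[OF H] in simp)

lemma HM_snoc:
  assumes H: "H \<in> M \<rightarrow>\<^sub>M HM" and X: "\<And>i. (\<lambda>\<omega>. X \<omega> i) \<in> borel_measurable M"
    and Th: "\<And>k i. (\<lambda>\<omega>. Th \<omega> k i) \<in> borel_measurable M"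
  shows "(\<lambda>\<omega>. H \<omega> @ [(X \<omega>, Th \<omega>)]) \<in> M \<rightarrow>\<^sub>M HM"
proof (rule HM_into)
  have L: "(\<lambda>\<omega>. length (H \<omega>)) \<in> M \<rightarrow>\<^sub>M count_space UNIV" by (rule meas_len_HM[OF H])
  have Lr: "(\<lambda>\<omega>. real (length (H \<omega>))) \<in> borel_measurable M" using measurable_compose[OF H HM_len] by simp
  show "(\<lambda>\<omega>. real (length (H \<omega> @ [(X \<omega>, Th \<omega>)]))) \<in> borel_measurable M" using Lr by simp
  fix s i
  have "(\<lambda>\<omega>. (\<lambda>l \<omega>. if s < l then fst (H \<omega> ! s) i else if s = l then X \<omega> i else fst (([]::hist) ! (s - l - 1)) i) (length (H \<omega>)) \<omega>) \<in> borel_measurable M"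
  proof (rule measurable_compose_countable'[OF _ L])
    fix l show "(\<lambda>\<omega>. if s < l then fst (H \<omega> ! s) i else if s = l then X \<omega> i else fst (([]::hist) ! (s - l - 1)) i) \<in> borel_measurable M"
      using measurable_compose[OF H HM_X] X by simp
  qed simp
  moreover have "fst ((H \<omega> @ [(X \<omega>, Th \<omega>)]) ! s) i = (if s < length (H \<omega>) then fst (H \<omega> ! s) i else if s = length (H \<omega>) then X \<omega> i else fst (([]::hist) ! (s - length (H \<omega>) - 1)) i)" for \<omega>
    by (simp add: nth_append nth_Cons')
  ultimately show "(\<lambda>\<omega>. fst ((H \<omega> @ [(X \<omega>, Th \<omega>)]) ! s) i) \<in> borel_measurable M" by simp
next
  have L: "(\<lambda>\<omega>. length (H \<omega>)) \<in> M \<rightarrow>\<^sub>M count_space UNIV" by (rule meas_len_HM[OF H])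
  fix s k i
  have "(\<lambda>\<omega>. (\<lambda>l \<omega>. if s < l then snd (H \<omega> ! s) k i else if s = l then Th \<omega> k i else snd (([]::hist) ! (s - l - 1)) k i) (length (H \<omega>)) \<omega>) \<in> borel_measurable M"
  proof (rule measurable_compose_countable'[OF _ L])
    fix l show "(\<lambda>\<omega>. if s < l then snd (H \<omega> ! s) k i else if s = l then Th \<omega> k i else snd (([]::hist) ! (s - l - 1)) k i) \<in> borel_measurable M"
      using measurable_compose[OF H HM_th] Th by simp
  qed simp
  moreover have "snd ((H \<omega> @ [(X \<omega>, Th \<omega>)]) ! s) k i = (if s < length (H \<omega>) then snd (H \<omega> ! s) k i else if s = length (H \<omega>) then Th \<omega> k i else snd (([]::hist) ! (s - length (H \<omega>) - 1)) k i)" for \<omega>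
    by (simp add: nth_append nth_Cons')
  ultimately show "(\<lambda>\<omega>. snd ((H \<omega> @ [(X \<omega>, Th \<omega>)]) ! s) k i) \<in> borel_measurable M" by simp
qed

lemma LM_cons:
  assumes Y: "Y \<in> M \<rightarrow>\<^sub>M LM" and X: "\<And>i. (\<lambda>\<omega>. X \<omega> i) \<in> borel_measurable M"
  shows "(\<lambda>\<omega>. (X \<omega>, A) # Y \<omega>) \<in> M \<rightarrow>\<^sub>M LM"
proof (rule LM_into)
  have Lr: "(\<lambda>\<omega>. real (length (Y \<omega>))) \<in> borel_measurable M" using measurable_compose[OF Y LM_len] by simp
  show "(\<lambda>\<omega>. real (length ((X \<omega>, A) # Y \<omega>))) \<in> borel_measurable M" using Lr by simp
  fix j i
  show "(\<lambda>\<omega>. fst (((X \<omega>, A) # Y \<omega>) ! j) i) \<in> borel_measurable M"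
    using measurable_compose[OF Y LM_X] X by (cases j) simp_all
next
  fix j k
  show "(\<lambda>\<omega>. if k \<in> snd (((X \<omega>, A) # Y \<omega>) ! j) then 1 else 0 :: real) \<in> borel_measurable M"
    using measurable_compose[OF Y LM_A] by (cases j) simp_all
qed

lemma Cmat_snoc: "Cmat d k (ys @ [y]) = mmul d (Cmat d k ys) (\<lambda>i j. idm i j - avec (snd y) k * fst y i * fst y j / 2)"
  by (cases y) (simp add: Cmat_def)

lemma Cmat_meas:
  assumes Y: "Y \<in> M \<rightarrow>\<^sub>M LM"
  shows "(\<lambda>\<omega>. Cmat d k (take n (Y \<omega>)) i j) \<in> borel_measurable M"
proof (induction n arbitrary: i j)
  case 0 then show ?case by (simp add: Cmat_def)
next
  case (Suc n)
  have L: "(\<lambda>\<omega>. length (Y \<omega>)) \<in> M \<rightarrow>\<^sub>M count_space UNIV" using measurable_compose[OF Y LM_length] by simp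
  have Xm: "(\<lambda>\<omega>. fst (Y \<omega> ! n) l) \<in> borel_measurable M" for l using measurable_compose[OF Y LM_X] by simp
  have Am: "(\<lambda>\<omega>. avec (snd (Y \<omega> ! n)) k) \<in> borel_measurable M" unfolding avec_def using measurable_compose[OF Y LM_A] by simp
  have e: "Cmat d k (take (Suc n) (Y \<omega>)) i j = (if n < length (Y \<omega>) then
      (\<Sum>l<d. Cmat d k (take n (Y \<omega>)) i l * (idm l j - avec (snd (Y \<omega> ! n)) k * fst (Y \<omega> ! n) l * fst (Y \<omega> ! n) j / 2))
      else Cmat d k (take n (Y \<omega>)) i j)" for \<omega>
    by (simp add: take_Suc_conv_app_nth Cmat_snoc mmul_def)
  have p: "Measurable.pred M (\<lambda>\<omega>. n < length (Y \<omega>))" using L by measurable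
  show ?case unfolding e using p Suc Xm Am by measurable
qed

lemma Sigplus_meas:
  assumes Y: "Y \<in> M \<rightarrow>\<^sub>M LM"
  shows "(\<lambda>\<omega>. Sigplus d k (Y \<omega>) i j) \<in> borel_measurable M"
proof -
  have L: "(\<lambda>\<omega>. length (Y \<omega>)) \<in> M \<rightarrow>\<^sub>M count_space UNIV" using measurable_compose[OF Y LM_length] by simp
  have "(\<lambda>\<omega>. (\<lambda>L \<omega>. (idm i j + (\<Sum>n\<in>{1..L}. Cmat d k (take n (Y \<omega>)) i j)) / 2) (length (Y \<omega>)) \<omega>) \<in> borel_measurable M"
    by (rule measurable_compose_countable'[OF _ L]) (use Cmat_meas[OF Y] in measurable)
  then show ?thesis unfolding Sigplus_def by simp
qed

lemma theta_meas:
  fixes D :: "ctx measure"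
  assumes sD: "sets D = sets (\<Pi>\<^sub>M i\<in>{..<d}. lborel)" and lo: "losses_ok d K loss"
    and X: "X \<in> M \<rightarrow>\<^sub>M D" and Y: "Y \<in> M \<rightarrow>\<^sub>M LM"
  shows "(\<lambda>\<omega>. theta_est d loss t (X \<omega>) A (Y \<omega>) k i) \<in> borel_measurable M"
proof -
  have l: "(\<lambda>\<omega>. loss t (X \<omega>) k) \<in> borel_measurable M" using measurable_compose[OF X loss_D[OF sD lo]] .
  have x: "(\<lambda>\<omega>. X \<omega> j) \<in> borel_measurable M" for j using measurable_compose[OF X D_coord[OF sD]] .
  show ?thesis unfolding theta_est_def mvec_def using Sigplus_meas[OF Y] l x by measurable
qed

lemma LM_cons2:
  assumes Y: "Y \<in> M \<rightarrow>\<^sub>M LM" and X: "\<And>i. (\<lambda>\<omega>. fst (E \<omega>) i) \<in> borel_measurable M"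
    and A: "\<And>k. (\<lambda>\<omega>. if k \<in> snd (E \<omega>) then 1 else 0 :: real) \<in> borel_measurable M"
  shows "(\<lambda>\<omega>. E \<omega> # Y \<omega>) \<in> M \<rightarrow>\<^sub>M LM"
proof (rule LM_into)
  have Lr: "(\<lambda>\<omega>. real (length (Y \<omega>))) \<in> borel_measurable M" using measurable_compose[OF Y LM_len] by simp
  show "(\<lambda>\<omega>. real (length (E \<omega> # Y \<omega>))) \<in> borel_measurable M" using Lr by simp
  fix j i
  show "(\<lambda>\<omega>. fst ((E \<omega> # Y \<omega>) ! j) i) \<in> borel_measurable M"
    using measurable_compose[OF Y LM_X] X by (cases j) simp_all
next
  fix j k
  show "(\<lambda>\<omega>. if k \<in> snd ((E \<omega> # Y \<omega>) ! j) then 1 else 0 :: real) \<in> borel_measurable M"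
    using measurable_compose[OF Y LM_A] A by (cases j) simp_all
qed

lemma LM_tl:
  assumes Y: "Y \<in> M \<rightarrow>\<^sub>M LM"
  shows "(\<lambda>\<omega>. tl (Y \<omega>)) \<in> M \<rightarrow>\<^sub>M LM"
proof (rule LM_into)
  have Lr: "(\<lambda>\<omega>. real (length (Y \<omega>))) \<in> borel_measurable M" using measurable_compose[OF Y LM_len] by simp
  then have "(\<lambda>\<omega>. max 0 (real (length (Y \<omega>)) - 1)) \<in> borel_measurable M" by measurable
  moreover have "real (length (tl ys)) = max 0 (real (length ys) - 1)" for ys :: "sample list"
    by (cases ys) auto
  ultimately show "(\<lambda>\<omega>. real (length (tl (Y \<omega>)))) \<in> borel_measurable M" by simp
  fix j i
  have e: "fst (tl ys ! j) i = (if ys = [] then fst (([]::sample list) ! j) i else fst (ys ! Suc j) i)" for ys :: "sample list"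
    by (cases ys) auto
  have p: "Measurable.pred M (\<lambda>\<omega>. Y \<omega> = [])"
  proof -
    have "Measurable.pred M (\<lambda>\<omega>. real (length (Y \<omega>)) = 0)" using Lr by measurable
    then show ?thesis by simp
  qed
  show "(\<lambda>\<omega>. fst (tl (Y \<omega>) ! j) i) \<in> borel_measurable M"
    unfolding e using measurable_compose[OF Y LM_X] p by measurable
next
  fix j k
  have Lr: "(\<lambda>\<omega>. real (length (Y \<omega>))) \<in> borel_measurable M" using measurable_compose[OF Y LM_len] by simp
  have e: "(if k \<in> snd (tl ys ! j) then 1 else 0 :: real) = (if ys = [] then (if k \<in> snd (([]::sample list) ! j) then 1 else 0) else (if k \<in> snd (ys ! Suc j) then 1 else 0))" for ys :: "sample list"
    by (cases ys) auto
  have p: "Measurable.pred M (\<lambda>\<omega>. Y \<omega> = [])"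
  proof -
    have "Measurable.pred M (\<lambda>\<omega>. real (length (Y \<omega>)) = 0)" using Lr by measurable
    then show ?thesis by simp
  qed
  show "(\<lambda>\<omega>. if k \<in> snd (tl (Y \<omega>) ! j) then 1 else 0 :: real) \<in> borel_measurable M"
    unfolding e using measurable_compose[OF Y LM_A] p by measurable
qed

lemma samp_meas_gen:
  fixes D :: "ctx measure" and P :: "'p measure"
  assumes pD: "prob_space D" and sD: "sets D = sets (\<Pi>\<^sub>M i\<in>{..<d}. lborel)" and U: "finite U"
  shows "\<And>Q G. (\<And>q x. set_pmf (Q q x) \<subseteq> U) \<Longrightarrow>
     (\<And>S. (\<lambda>(q,x). pmf (Q q x) S) \<in> borel_measurable ((P \<Otimes>\<^sub>M LM) \<Otimes>\<^sub>M D)) \<Longrightarrow>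
     (\<lambda>(q,ys). G q ys) \<in> borel_measurable ((P \<Otimes>\<^sub>M LM) \<Otimes>\<^sub>M LM) \<Longrightarrow>
     (\<lambda>q. samp D (Q q) n (G q)) \<in> borel_measurable (P \<Otimes>\<^sub>M LM)"
proof (induction n)
  case 0
  have "(\<lambda>q. (q, [])) \<in> (P \<Otimes>\<^sub>M LM) \<rightarrow>\<^sub>M (P \<Otimes>\<^sub>M LM) \<Otimes>\<^sub>M LM" by measurable
  from measurable_compose[OF this 0(3)] show ?case by simp
next
  case (Suc n)
  interpret D: prob_space D by (rule pD)
  have xc: "(\<lambda>x. x i) \<in> borel_measurable D" for i by (rule D_coord[OF sD])
  define Q' where "Q' = (\<lambda>(q, zs::sample list). Q (q, tl zs))"
  define G' where "G' = (\<lambda>(q, zs::sample list) ys. G (q, tl zs) (hd zs # ys))"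
  have tlm: "(\<lambda>((q,zs),x). ((q, tl zs), x)) \<in> ((P \<Otimes>\<^sub>M LM) \<Otimes>\<^sub>M D) \<rightarrow>\<^sub>M ((P \<Otimes>\<^sub>M LM) \<Otimes>\<^sub>M D)"
  proof -
    have "(\<lambda>\<omega>. tl (snd (fst \<omega>))) \<in> ((P \<Otimes>\<^sub>M LM) \<Otimes>\<^sub>M D) \<rightarrow>\<^sub>M LM" by (rule LM_tl) measurable
    then show ?thesis by (simp add: case_prod_beta') measurable
  qed
  have Q'm: "(\<lambda>(q,x). pmf (Q' q x) S) \<in> borel_measurable ((P \<Otimes>\<^sub>M LM) \<Otimes>\<^sub>M D)" for S
    using measurable_compose[OF tlm Suc.prems(2)[of S]] unfolding Q'_def by (simp add: case_prod_beta')
  have G'm: "(\<lambda>(q,ys). G' q ys) \<in> borel_measurable ((P \<Otimes>\<^sub>M LM) \<Otimes>\<^sub>M LM)"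
  proof -
    have 1: "(\<lambda>\<omega>. tl (snd (fst \<omega>))) \<in> ((P \<Otimes>\<^sub>M LM) \<Otimes>\<^sub>M LM) \<rightarrow>\<^sub>M LM" by (rule LM_tl) measurable
    have 2: "(\<lambda>\<omega>. hd (snd (fst \<omega>)) # snd \<omega>) \<in> ((P \<Otimes>\<^sub>M LM) \<Otimes>\<^sub>M LM) \<rightarrow>\<^sub>M LM"
    proof (rule LM_cons2)
      show "(\<lambda>\<omega>. snd \<omega>) \<in> ((P \<Otimes>\<^sub>M LM) \<Otimes>\<^sub>M LM) \<rightarrow>\<^sub>M LM" by measurable
      fix i
      have "Measurable.pred LM (\<lambda>ys::sample list. ys = [])"
      proof -
        have "Measurable.pred LM (\<lambda>ys::sample list. real (length ys) = 0)" using LM_len by measurable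
        then show ?thesis by simp
      qed
      then have "(\<lambda>ys. if ys = [] then fst (hd ([]::sample list)) i else fst (ys ! 0) i) \<in> borel_measurable LM"
        using LM_X by measurable
      moreover have "(\<lambda>ys::sample list. fst (hd ys) i) = (\<lambda>ys. if ys = [] then fst (hd ([]::sample list)) i else fst (ys ! 0) i)"
        by (auto simp: hd_conv_nth)
      ultimately have "(\<lambda>ys::sample list. fst (hd ys) i) \<in> borel_measurable LM" by simp
      then show "(\<lambda>\<omega>. fst (hd (snd (fst \<omega>))) i) \<in> borel_measurable ((P \<Otimes>\<^sub>M LM) \<Otimes>\<^sub>M LM)" by measurable
    next
      fix k
      have "Measurable.pred LM (\<lambda>ys::sample list. ys = [])"
      proof -
        have "Measurable.pred LM (\<lambda>ys::sample list. real (length ys) = 0)" using LM_len by measurable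
        then show ?thesis by simp
      qed
      then have "(\<lambda>ys::sample list. if ys = [] then (if k \<in> snd (hd ([]::sample list)) then 1 else 0) else (if k \<in> snd (ys ! 0) then 1 else 0 :: real)) \<in> borel_measurable LM"
        using LM_A by measurable
      moreover have "(\<lambda>ys::sample list. if k \<in> snd (hd ys) then 1 else 0 :: real) = (\<lambda>ys. if ys = [] then (if k \<in> snd (hd ([]::sample list)) then 1 else 0) else (if k \<in> snd (ys ! 0) then 1 else 0))"
        by (auto simp: hd_conv_nth)
      ultimately have "(\<lambda>ys::sample list. if k \<in> snd (hd ys) then 1 else 0 :: real) \<in> borel_measurable LM" by simp
      then show "(\<lambda>\<omega>. if k \<in> snd (hd (snd (fst \<omega>))) then 1 else 0 :: real) \<in> borel_measurable ((P \<Otimes>\<^sub>M LM) \<Otimes>\<^sub>M LM)" by measurable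
    qed
    have "(\<lambda>\<omega>. ((fst (fst \<omega>), tl (snd (fst \<omega>))), hd (snd (fst \<omega>)) # snd \<omega>)) \<in> ((P \<Otimes>\<^sub>M LM) \<Otimes>\<^sub>M LM) \<rightarrow>\<^sub>M ((P \<Otimes>\<^sub>M LM) \<Otimes>\<^sub>M LM)"
      using 1 2 by measurable
    from measurable_compose[OF this Suc.prems(3)] show ?thesis unfolding G'_def by (simp add: case_prod_beta')
  qed
  have IH: "(\<lambda>q. samp D (Q' q) n (G' q)) \<in> borel_measurable (P \<Otimes>\<^sub>M LM)"
  proof (rule Suc.IH[OF _ Q'm G'm])
    fix q x have "Q' q x = Q (fst q, tl (snd q)) x" unfolding Q'_def by (simp add: case_prod_beta')
    then show "set_pmf (Q' q x) \<subseteq> U" using Suc.prems(1)[of "(fst q, tl (snd q))" x] by simp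
  qed
  have step: "(\<lambda>(q, x). samp D (Q q) n (\<lambda>ys. G q ((x, A) # ys)) * ennreal (pmf (Q q x) A)) \<in> borel_measurable ((P \<Otimes>\<^sub>M LM) \<Otimes>\<^sub>M D)" for A
  proof -
    have c: "(\<lambda>\<omega>. (fst (fst \<omega>), (snd \<omega>, A) # snd (fst \<omega>))) \<in> ((P \<Otimes>\<^sub>M LM) \<Otimes>\<^sub>M D) \<rightarrow>\<^sub>M (P \<Otimes>\<^sub>M LM)"
    proof -
      have "(\<lambda>\<omega>. (snd \<omega>, A) # snd (fst \<omega>)) \<in> ((P \<Otimes>\<^sub>M LM) \<Otimes>\<^sub>M D) \<rightarrow>\<^sub>M LM"
      proof (rule LM_cons)
        show "(\<lambda>\<omega>. snd (fst \<omega>)) \<in> ((P \<Otimes>\<^sub>M LM) \<Otimes>\<^sub>M D) \<rightarrow>\<^sub>M LM"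
          by (rule measurable_compose[OF measurable_fst measurable_snd])
        fix i show "(\<lambda>\<omega>. snd \<omega> i) \<in> borel_measurable ((P \<Otimes>\<^sub>M LM) \<Otimes>\<^sub>M D)"
          by (rule measurable_compose[OF measurable_snd xc])
      qed
      then show ?thesis
        by (intro measurable_Pair) (rule measurable_compose[OF measurable_fst measurable_fst])
    qed
    have "(\<lambda>\<omega>. samp D (Q' (fst (fst \<omega>), (snd \<omega>, A) # snd (fst \<omega>))) n (G' (fst (fst \<omega>), (snd \<omega>, A) # snd (fst \<omega>)))) \<in> borel_measurable ((P \<Otimes>\<^sub>M LM) \<Otimes>\<^sub>M D)"
      using measurable_compose[OF c IH] by simp
    then have "(\<lambda>\<omega>. samp D (Q (fst \<omega>)) n (\<lambda>ys. G (fst \<omega>) ((snd \<omega>, A) # ys))) \<in> borel_measurable ((P \<Otimes>\<^sub>M LM) \<Otimes>\<^sub>M D)"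
      unfolding Q'_def G'_def by (simp add: case_prod_beta')
    moreover have "(\<lambda>\<omega>. pmf (Q (fst \<omega>) (snd \<omega>)) A) \<in> borel_measurable ((P \<Otimes>\<^sub>M LM) \<Otimes>\<^sub>M D)"
      using Suc.prems(2)[of A] by (simp add: case_prod_beta')
    ultimately show ?thesis by (simp add: case_prod_beta') measurable
  qed
  have eq: "samp D (Q q) (Suc n) (G q) = (\<integral>\<^sup>+ x. (\<Sum>A\<in>U. samp D (Q q) n (\<lambda>ys. G q ((x, A) # ys)) * ennreal (pmf (Q q x) A)) \<partial>D)" for q
    unfolding samp.simps
    by (intro nn_integral_cong nn_integral_measure_pmf_support[OF U]) (use Suc.prems(1)[of q] in auto)
  have "(\<lambda>(q, x). \<Sum>A\<in>U. samp D (Q q) n (\<lambda>ys. G q ((x, A) # ys)) * ennreal (pmf (Q q x) A)) \<in> borel_measurable ((P \<Otimes>\<^sub>M LM) \<Otimes>\<^sub>M D)"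
    using step by (simp add: case_prod_beta') measurable
  then have "(\<lambda>q. \<integral>\<^sup>+ x. (\<Sum>A\<in>U. samp D (Q q) n (\<lambda>ys. G q ((x, A) # ys)) * ennreal (pmf (Q q x) A)) \<partial>D) \<in> borel_measurable (P \<Otimes>\<^sub>M LM)"
    by (rule D.borel_measurable_nn_integral)
  then show ?case unfolding eq .
qed

lemma samp_meas:
  fixes D :: "ctx measure" and P :: "'p measure"
  assumes pD: "prob_space D" and sD: "sets D = sets (\<Pi>\<^sub>M i\<in>{..<d}. lborel)" and U: "finite U"
    and sup: "\<And>q x. set_pmf (Q q x) \<subseteq> U"
    and Qm: "\<And>S. (\<lambda>(q,x). pmf (Q q x) S) \<in> borel_measurable (P \<Otimes>\<^sub>M D)"
    and Gm: "(\<lambda>(q,ys). G q ys) \<in> borel_measurable (P \<Otimes>\<^sub>M LM)"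
  shows "(\<lambda>q. samp D (Q q) n (G q)) \<in> borel_measurable P"
proof -
  have "(\<lambda>q. samp D ((\<lambda>(q, zs::sample list). Q q) q) n ((\<lambda>(q, zs::sample list). G q) q)) \<in> borel_measurable (P \<Otimes>\<^sub>M LM)"
  proof (rule samp_meas_gen[OF pD sD U])
    fix q x show "set_pmf ((\<lambda>(q, zs::sample list). Q q) q x) \<subseteq> U" using sup by (simp add: case_prod_beta')
  next
    fix S
    have "(\<lambda>\<omega>. (fst (fst \<omega>), snd \<omega>)) \<in> (P \<Otimes>\<^sub>M LM) \<Otimes>\<^sub>M D \<rightarrow>\<^sub>M P \<Otimes>\<^sub>M D" by measurable
    from measurable_compose[OF this Qm[of S]]
    show "(\<lambda>(q, x). pmf ((\<lambda>(q, zs::sample list). Q q) q x) S) \<in> borel_measurable ((P \<Otimes>\<^sub>M LM) \<Otimes>\<^sub>M D)"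
      by (simp add: case_prod_beta')
  next
    have "(\<lambda>\<omega>. (fst (fst \<omega>), snd \<omega>)) \<in> (P \<Otimes>\<^sub>M LM) \<Otimes>\<^sub>M LM \<rightarrow>\<^sub>M P \<Otimes>\<^sub>M LM" by measurable
    from measurable_compose[OF this Gm]
    show "(\<lambda>(q, ys). (\<lambda>(q, zs::sample list). G q) q ys) \<in> borel_measurable ((P \<Otimes>\<^sub>M LM) \<Otimes>\<^sub>M LM)"
      by (simp add: case_prod_beta')
  qed
  moreover have "(\<lambda>q. (q, []::sample list)) \<in> P \<rightarrow>\<^sub>M P \<Otimes>\<^sub>M LM" by measurable
  ultimately have "(\<lambda>q. samp D ((\<lambda>(q, zs::sample list). Q q) (q, [])) n ((\<lambda>(q, zs::sample list). G q) (q, []))) \<in> borel_measurable P"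
    by (rule measurable_compose[rotated])
  then show ?thesis by simp
qed

lemma run_step_sum:
  assumes "0 < K" "1 \<le> m" "decomp_ok K m p"
  shows "run D d K m T loss p (Suc n) h F =
    (\<integral>\<^sup>+ x. (\<Sum>A\<in>acts K m. samp D (pol D d K m T p h (Suc (length h))) (Mt D d K m T h (Suc (length h)))
        (\<lambda>ys. run D d K m T loss p n (h @ [(x, theta_est d loss (Suc (length h)) x A ys)]) F)
       * ennreal (pmf (pol D d K m T p h (Suc (length h)) x) A)) \<partial>D)"
  unfolding run.simps Let_def
  by (intro nn_integral_cong nn_integral_measure_pmf_support[OF finite_acts])
     (auto dest!: subsetD[OF pol_support[OF assms]])

lemma run_integrand_meas:
  fixes D :: "ctx measure"
  assumes cd: "context_dist d D" and lo: "losses_ok d K loss" and dec: "decomp_ok K m p"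
    and K: "0 < K" and m: "1 \<le> m" and RF: "(\<lambda>h. run D d K m T loss p n h F) \<in> borel_measurable HM"
  shows "(\<lambda>\<omega>. \<Sum>A\<in>acts K m. samp D (pol D d K m T p (fst \<omega>) t) (Mt D d K m T (fst \<omega>) t)
        (\<lambda>ys. run D d K m T loss p n (fst \<omega> @ [(snd \<omega>, theta_est d loss t (snd \<omega>) A ys)]) F)
       * ennreal (pmf (pol D d K m T p (fst \<omega>) t (snd \<omega>)) A)) \<in> borel_measurable (HM \<Otimes>\<^sub>M D)"
proof -
  have pD: "prob_space D" and sD: "sets D = sets (\<Pi>\<^sub>M i\<in>{..<d}. lborel)" using cd unfolding context_dist_def by auto
  have xc: "(\<lambda>x. x i) \<in> borel_measurable D" for i by (rule D_coord[OF sD])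
    have H1: "fst \<in> HM \<Otimes>\<^sub>M D \<rightarrow>\<^sub>M HM" by measurable
    have X1: "(\<lambda>\<omega>. snd \<omega> i) \<in> borel_measurable (HM \<Otimes>\<^sub>M D)" for i by (rule measurable_compose[OF measurable_snd xc])
    have tm: "(\<lambda>\<omega>. samp D (pol D d K m T p (fst \<omega>) t) (Mt D d K m T (fst \<omega>) t)
        (\<lambda>ys. run D d K m T loss p n (fst \<omega> @ [(snd \<omega>, theta_est d loss t (snd \<omega>) A ys)]) F)
       * ennreal (pmf (pol D d K m T p (fst \<omega>) t (snd \<omega>)) A)) \<in> borel_measurable (HM \<Otimes>\<^sub>M D)" for A
    proof -
      have pm: "(\<lambda>\<omega>. pmf (pol D d K m T p (fst \<omega>) t (snd \<omega>)) A) \<in> borel_measurable (HM \<Otimes>\<^sub>M D)"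
        by (rule pol_meas[OF H1 X1 dec])
      have sm: "(\<lambda>\<omega>. (\<lambda>N \<omega>. samp D (pol D d K m T p (fst \<omega>) t) N
          (\<lambda>ys. run D d K m T loss p n (fst \<omega> @ [(snd \<omega>, theta_est d loss t (snd \<omega>) A ys)]) F)) (Mt D d K m T (fst \<omega>) t) \<omega>)
          \<in> borel_measurable (HM \<Otimes>\<^sub>M D)"
      proof (rule measurable_compose_countable'[OF _ Mt_meas[OF H1]])
        fix N
        show "(\<lambda>\<omega>. samp D (pol D d K m T p (fst \<omega>) t) N
          (\<lambda>ys. run D d K m T loss p n (fst \<omega> @ [(snd \<omega>, theta_est d loss t (snd \<omega>) A ys)]) F)) \<in> borel_measurable (HM \<Otimes>\<^sub>M D)"
        proof (rule samp_meas[OF pD sD finite_acts])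
          fix q x show "set_pmf (pol D d K m T p (fst q) t x) \<subseteq> acts K m" by (rule pol_support[OF K m dec])
        next
          fix S
          have H2: "(\<lambda>\<omega>. fst (fst \<omega>)) \<in> (HM \<Otimes>\<^sub>M D) \<Otimes>\<^sub>M D \<rightarrow>\<^sub>M HM" by measurable
          have X2: "(\<lambda>\<omega>. snd \<omega> i) \<in> borel_measurable ((HM \<Otimes>\<^sub>M D) \<Otimes>\<^sub>M D)" for i by (rule measurable_compose[OF measurable_snd xc])
          show "(\<lambda>(q, x). pmf (pol D d K m T p (fst q) t x) S) \<in> borel_measurable ((HM \<Otimes>\<^sub>M D) \<Otimes>\<^sub>M D)"
            using pol_meas[OF H2 X2 dec] by (simp add: case_prod_beta')
        next
          have H3: "(\<lambda>\<omega>. fst (fst \<omega>)) \<in> (HM \<Otimes>\<^sub>M D) \<Otimes>\<^sub>M LM \<rightarrow>\<^sub>M HM" by measurable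
          have Xd: "(\<lambda>\<omega>. snd (fst \<omega>)) \<in> (HM \<Otimes>\<^sub>M D) \<Otimes>\<^sub>M LM \<rightarrow>\<^sub>M D" by measurable
          have X3: "(\<lambda>\<omega>. snd (fst \<omega>) i) \<in> borel_measurable ((HM \<Otimes>\<^sub>M D) \<Otimes>\<^sub>M LM)" for i by (rule measurable_compose[OF Xd xc])
          have Y3: "snd \<in> (HM \<Otimes>\<^sub>M D) \<Otimes>\<^sub>M LM \<rightarrow>\<^sub>M LM" by measurable
          have Th: "(\<lambda>\<omega>. theta_est d loss t (snd (fst \<omega>)) A (snd \<omega>) k i) \<in> borel_measurable ((HM \<Otimes>\<^sub>M D) \<Otimes>\<^sub>M LM)" for k i
            by (rule theta_meas[OF sD lo Xd Y3])
          have "(\<lambda>\<omega>. fst (fst \<omega>) @ [(snd (fst \<omega>), theta_est d loss t (snd (fst \<omega>)) A (snd \<omega>))]) \<in> (HM \<Otimes>\<^sub>M D) \<Otimes>\<^sub>M LM \<rightarrow>\<^sub>M HM"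
            by (rule HM_snoc[OF H3 X3 Th])
          from measurable_compose[OF this RF]
          show "(\<lambda>(q, ys). run D d K m T loss p n (fst q @ [(snd q, theta_est d loss t (snd q) A ys)]) F) \<in> borel_measurable ((HM \<Otimes>\<^sub>M D) \<Otimes>\<^sub>M LM)"
            by (simp add: case_prod_beta')
        qed
      qed simp
      show ?thesis using sm pm by measurable
    qed
    show ?thesis using tm by measurable
qed

lemma run_meas:
  fixes D :: "ctx measure"
  assumes cd: "context_dist d D" and lo: "losses_ok d K loss" and dec: "decomp_ok K m p"
    and K: "0 < K" and m: "1 \<le> m" and F: "F \<in> borel_measurable HM"
  shows "(\<lambda>h. run D d K m T loss p n h F) \<in> borel_measurable HM"
proof (induction n)
  case 0 then show ?case using F by simp
next
  case (Suc n)
  have pD: "prob_space D" using cd unfolding context_dist_def by auto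
  interpret D: prob_space D by (rule pD)
  define R where "R = (\<lambda>l h. \<integral>\<^sup>+ x. (\<Sum>A\<in>acts K m. samp D (pol D d K m T p h (Suc l)) (Mt D d K m T h (Suc l))
        (\<lambda>ys. run D d K m T loss p n (h @ [(x, theta_est d loss (Suc l) x A ys)]) F)
       * ennreal (pmf (pol D d K m T p h (Suc l) x) A)) \<partial>D)"
  have Rm: "R l \<in> borel_measurable HM" for l
  proof -
    have "(\<lambda>(h, x). \<Sum>A\<in>acts K m. samp D (pol D d K m T p h (Suc l)) (Mt D d K m T h (Suc l))
        (\<lambda>ys. run D d K m T loss p n (h @ [(x, theta_est d loss (Suc l) x A ys)]) F)
       * ennreal (pmf (pol D d K m T p h (Suc l) x) A)) \<in> borel_measurable (HM \<Otimes>\<^sub>M D)"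
      using run_integrand_meas[OF cd lo dec K m Suc.IH, of "Suc l"] by (simp add: case_prod_beta')
    from D.borel_measurable_nn_integral[OF this] show ?thesis unfolding R_def by simp
  qed
  have "(\<lambda>h. R (length h) h) \<in> borel_measurable HM"
    by (rule measurable_compose_countable'[OF _ HM_length]) (use Rm in auto)
  moreover have e: "(\<lambda>h. run D d K m T loss p (Suc n) h F) = (\<lambda>h. R (length h) h)"
    unfolding R_def by (intro ext run_step_sum[OF K m dec])
  ultimately show ?case by (simp only: e)
qed

lemma samp_const:
  assumes "prob_space D" shows "(\<And>ys. G ys = c) \<Longrightarrow> samp D Q n G = c"
proof (induction n arbitrary: G)
  case 0 then show ?case by simp
next
  case (Suc n)
  have "samp D Q (Suc n) G = (\<integral>\<^sup>+ x. (\<integral>\<^sup>+ A. c \<partial>measure_pmf (Q x)) \<partial>D)"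
    unfolding samp.simps using Suc.IH[of "\<lambda>ys. G (_ # ys)"] Suc.prems by simp
  also have "\<dots> = c" using prob_space.emeasure_space_1[OF assms] by (simp add: nn_integral_const)
  finally show ?case .
qed

lemma run_const_gen:
  assumes "prob_space D" shows "(\<And>ys. F (h @ ys) = F h) \<Longrightarrow> run D d K m T loss p n h F = F h"
proof (induction n arbitrary: h)
  case 0 then show ?case by simp
next
  case (Suc n)
  have IH: "run D d K m T loss p n (h @ [e]) F = F h" for e
    using Suc.IH[of "h @ [e]"] Suc.prems[of "[e]"] Suc.prems by simp
  show ?case unfolding run.simps Let_def IH
    using samp_const[OF assms] prob_space.emeasure_space_1[OF assms] by (simp add: nn_integral_const)
qed

lemma run_const: "prob_space D \<Longrightarrow> run D d K m T loss p n h (\<lambda>_. c) = c"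
  using run_const_gen[of D "\<lambda>_. c"] by simp

lemma run_split: "run D d K m T loss p (a + b) h F = run D d K m T loss p a h (\<lambda>h'. run D d K m T loss p b h' F)"
  by (induction a arbitrary: h) (simp_all add: Let_def)

lemma run_cong:
  "(\<And>ys. length ys = n \<Longrightarrow> F (h @ ys) = F' (h @ ys)) \<Longrightarrow> run D d K m T loss p n h F = run D d K m T loss p n h F'"
proof (induction n arbitrary: h)
  case 0 then show ?case using 0[of "[]"] by simp
next
  case (Suc n)
  have "run D d K m T loss p n (h @ [e]) F = run D d K m T loss p n (h @ [e]) F'" for e
    by (rule Suc.IH) (use Suc.prems[of "e # _"] in simp)
  then show ?case by (simp add: Let_def)
qed

lemma samp_mono: "(\<And>ys. G ys \<le> G' ys) \<Longrightarrow> samp D Q n G \<le> samp D Q n G'"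
proof (induction n arbitrary: G G')
  case 0 then show ?case by simp
next
  case (Suc n) then show ?case by (simp add: nn_integral_mono)
qed

lemma run_mono: "(\<And>h. F h \<le> F' h) \<Longrightarrow> run D d K m T loss p n h F \<le> run D d K m T loss p n h F'"
proof (induction n arbitrary: h)
  case 0 then show ?case by simp
next
  case (Suc n) then show ?case by (simp add: Let_def nn_integral_mono samp_mono)
qed

lemma samp_step_sum:
  assumes U: "finite U" and sup: "\<And>x. set_pmf (Q x) \<subseteq> U"
  shows "samp D Q (Suc n) G = (\<integral>\<^sup>+ x. (\<Sum>A\<in>U. samp D Q n (\<lambda>ys. G ((x, A) # ys)) * ennreal (pmf (Q x) A)) \<partial>D)"
  unfolding samp.simps
  by (intro nn_integral_cong nn_integral_measure_pmf_support[OF U]) (auto dest!: subsetD[OF sup])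

lemma samp_lin:
  fixes D :: "ctx measure"
  assumes pD: "prob_space D" and sD: "sets D = sets (\<Pi>\<^sub>M i\<in>{..<d}. lborel)" and U: "finite U"
    and sup: "\<And>x. set_pmf (Q x) \<subseteq> U" and Qm: "\<And>S. (\<lambda>x. pmf (Q x) S) \<in> borel_measurable D"
  shows "G1 \<in> borel_measurable LM \<Longrightarrow> G2 \<in> borel_measurable LM \<Longrightarrow>
    samp D Q n (\<lambda>ys. c * G1 ys + G2 ys) = c * samp D Q n G1 + samp D Q n G2"
proof (induction n arbitrary: G1 G2)
  case 0 then show ?case by simp
next
  case (Suc n)
  interpret D: prob_space D by (rule pD)
  have xc: "(\<lambda>x. x i) \<in> borel_measurable D" for i by (rule D_coord[OF sD])
  have consm: "(\<lambda>ys. G ((x, A) # ys)) \<in> borel_measurable LM" if "G \<in> borel_measurable LM" for G x A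
  proof -
    have "(\<lambda>ys. (x, A) # ys) \<in> LM \<rightarrow>\<^sub>M LM" by (rule LM_cons[where X="\<lambda>_. x"]) auto
    from measurable_compose[OF this that] show ?thesis .
  qed
  have fm: "(\<lambda>x. \<Sum>A\<in>U. samp D Q n (\<lambda>ys. G ((x, A) # ys)) * ennreal (pmf (Q x) A)) \<in> borel_measurable D"
    if "G \<in> borel_measurable LM" for G
  proof -
    have "(\<lambda>x. samp D ((\<lambda>_. Q) x) n ((\<lambda>x ys. G ((x, A) # ys)) x)) \<in> borel_measurable D" for A
    proof (rule samp_meas[OF pD sD U])
      show "set_pmf (Q x) \<subseteq> U" for x using sup .
      show "(\<lambda>(q, x). pmf (Q x) S) \<in> borel_measurable (D \<Otimes>\<^sub>M D)" for S
        using measurable_compose[OF measurable_snd Qm[of S]] by (simp add: case_prod_beta')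
      have "(\<lambda>\<omega>. (fst \<omega>, A) # snd \<omega>) \<in> D \<Otimes>\<^sub>M LM \<rightarrow>\<^sub>M LM"
        by (rule LM_cons) (use measurable_compose[OF measurable_fst xc] in auto)
      from measurable_compose[OF this that]
      show "(\<lambda>(q, ys). G ((q, A) # ys)) \<in> borel_measurable (D \<Otimes>\<^sub>M LM)" by (simp add: case_prod_beta')
    qed
    then show ?thesis using Qm by simp measurable
  qed
  have "samp D Q (Suc n) (\<lambda>ys. c * G1 ys + G2 ys) =
      (\<integral>\<^sup>+ x. (\<Sum>A\<in>U. (c * samp D Q n (\<lambda>ys. G1 ((x, A) # ys)) + samp D Q n (\<lambda>ys. G2 ((x, A) # ys))) * ennreal (pmf (Q x) A)) \<partial>D)"
    unfolding samp_step_sum[OF U sup] using Suc.IH[OF consm[OF Suc.prems(1)] consm[OF Suc.prems(2)]] by simp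
  also have "\<dots> = (\<integral>\<^sup>+ x. c * (\<Sum>A\<in>U. samp D Q n (\<lambda>ys. G1 ((x, A) # ys)) * ennreal (pmf (Q x) A))
       + (\<Sum>A\<in>U. samp D Q n (\<lambda>ys. G2 ((x, A) # ys)) * ennreal (pmf (Q x) A)) \<partial>D)"
    by (simp add: distrib_right sum.distrib sum_distrib_left mult.assoc)
  also have "\<dots> = c * (\<integral>\<^sup>+ x. (\<Sum>A\<in>U. samp D Q n (\<lambda>ys. G1 ((x, A) # ys)) * ennreal (pmf (Q x) A)) \<partial>D)
       + (\<integral>\<^sup>+ x. (\<Sum>A\<in>U. samp D Q n (\<lambda>ys. G2 ((x, A) # ys)) * ennreal (pmf (Q x) A)) \<partial>D)"
    using fm[OF Suc.prems(1)] fm[OF Suc.prems(2)] by (simp add: nn_integral_add nn_integral_cmult)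
  also have "\<dots> = c * samp D Q (Suc n) G1 + samp D Q (Suc n) G2"
    unfolding samp_step_sum[OF U sup] ..
  finally show ?case .
qed

lemma run_lin:
  fixes D :: "ctx measure"
  assumes cd: "context_dist d D" and lo: "losses_ok d K loss" and dec: "decomp_ok K m p"
    and K: "0 < K" and m: "1 \<le> m" and F1: "F1 \<in> borel_measurable HM" and F2: "F2 \<in> borel_measurable HM"
  shows "run D d K m T loss p n h (\<lambda>h. c * F1 h + F2 h) = c * run D d K m T loss p n h F1 + run D d K m T loss p n h F2"
proof (induction n arbitrary: h)
  case 0 then show ?case by simp
next
  case (Suc n)
  have pD: "prob_space D" and sD: "sets D = sets (\<Pi>\<^sub>M i\<in>{..<d}. lborel)" using cd unfolding context_dist_def by auto
  interpret D: prob_space D by (rule pD)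
  have xc: "(\<lambda>x. x i) \<in> borel_measurable D" for i by (rule D_coord[OF sD])
  define t where "t = Suc (length h)"
  define I where "I = (\<lambda>F x. \<Sum>A\<in>acts K m. samp D (pol D d K m T p h t) (Mt D d K m T h t)
        (\<lambda>ys. run D d K m T loss p n (h @ [(x, theta_est d loss t x A ys)]) F)
       * ennreal (pmf (pol D d K m T p h t x) A))"
  have Im: "I F \<in> borel_measurable D" if "F \<in> borel_measurable HM" for F
  proof -
    have "(\<lambda>x. (h, x)) \<in> D \<rightarrow>\<^sub>M HM \<Otimes>\<^sub>M D" by measurable
    from measurable_compose[OF this run_integrand_meas[OF cd lo dec K m run_meas[OF cd lo dec K m that, where n=n], where t=t]]
    show ?thesis unfolding I_def by simp
  qed
  have Rm: "(\<lambda>ys. run D d K m T loss p n (h @ [(x, theta_est d loss t x A ys)]) F) \<in> borel_measurable LM"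
    if "F \<in> borel_measurable HM" "x \<in> space D" for F x A
  proof -
    have Xc: "(\<lambda>_::sample list. x) \<in> LM \<rightarrow>\<^sub>M D" using that(2) by simp
    have "(\<lambda>ys. h @ [(x, theta_est d loss t x A ys)]) \<in> LM \<rightarrow>\<^sub>M HM"
      by (rule HM_snoc[where H="\<lambda>_. h"]) (auto intro: theta_meas[OF sD lo Xc, where Y="\<lambda>ys. ys", simplified])
    from measurable_compose[OF this run_meas[OF cd lo dec K m that(1)]] show ?thesis .
  qed
  have Qm: "(\<lambda>x. pmf (pol D d K m T p h t x) S) \<in> borel_measurable D" for S
    by (rule pol_meas[OF _ xc dec, where H="\<lambda>_. h"]) simp
  have "run D d K m T loss p (Suc n) h (\<lambda>h. c * F1 h + F2 h) = (\<integral>\<^sup>+ x. c * I F1 x + I F2 x \<partial>D)"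
  proof -
    have "run D d K m T loss p (Suc n) h (\<lambda>h. c * F1 h + F2 h) = (\<integral>\<^sup>+ x. (\<Sum>A\<in>acts K m. samp D (pol D d K m T p h t) (Mt D d K m T h t)
        (\<lambda>ys. c * run D d K m T loss p n (h @ [(x, theta_est d loss t x A ys)]) F1 + run D d K m T loss p n (h @ [(x, theta_est d loss t x A ys)]) F2)
       * ennreal (pmf (pol D d K m T p h t x) A)) \<partial>D)"
      unfolding run_step_sum[OF K m dec] t_def Suc.IH ..
    also have "\<dots> = (\<integral>\<^sup>+ x. c * I F1 x + I F2 x \<partial>D)"
    proof (rule nn_integral_cong)
      fix x assume x: "x \<in> space D"
      show "(\<Sum>A\<in>acts K m. samp D (pol D d K m T p h t) (Mt D d K m T h t)
        (\<lambda>ys. c * run D d K m T loss p n (h @ [(x, theta_est d loss t x A ys)]) F1 + run D d K m T loss p n (h @ [(x, theta_est d loss t x A ys)]) F2)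
       * ennreal (pmf (pol D d K m T p h t x) A)) = c * I F1 x + I F2 x"
        unfolding I_def
        using samp_lin[OF pD sD finite_acts pol_support[OF K m dec] Qm Rm[OF F1 x] Rm[OF F2 x]]
        by (simp add: distrib_right sum.distrib sum_distrib_left mult.assoc)
    qed
    finally show ?thesis .
  qed
  also have "\<dots> = c * (\<integral>\<^sup>+ x. I F1 x \<partial>D) + (\<integral>\<^sup>+ x. I F2 x \<partial>D)"
    using Im[OF F1] Im[OF F2] by (simp add: nn_integral_add nn_integral_cmult)
  also have "\<dots> = c * run D d K m T loss p (Suc n) h F1 + run D d K m T loss p (Suc n) h F2"
    unfolding run_step_sum[OF K m dec] I_def t_def ..
  finally show ?case .
qed

lemma term_bound:
  fixes x S c :: real
  assumes x: "0 \<le> x" "x \<le> S" and S: "0 < S" and c: "0 < c"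
  shows "x / sqrt (1 + S / c) \<le> 3 * sqrt c * (sqrt (S + x) - sqrt S)"
proof -
  define a where "a = sqrt S"
  define b where "b = sqrt (S + x)"
  have a: "0 < a" unfolding a_def using S by simp
  have ab: "a \<le> b" unfolding a_def b_def using x by simp
  have b2: "b \<le> 2 * a"
  proof -
    have "S + x \<le> 4 * S" using x S by simp
    then have "sqrt (S + x) \<le> sqrt (4 * S)" by simp
    also have "sqrt (4 * S) = 2 * sqrt S" by (simp add: real_sqrt_mult)
    finally show ?thesis unfolding a_def b_def .
  qed
  have xe: "x = (b - a) * (b + a)"
    unfolding a_def b_def using x S by (simp add: algebra_simps)
  have "sqrt (S / c) \<le> sqrt (1 + S / c)" by simp
  moreover have "sqrt (S / c) = a / sqrt c" unfolding a_def by (simp add: real_sqrt_divide)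
  ultimately have den: "a / sqrt c \<le> sqrt (1 + S / c)" by simp
  have "x / sqrt (1 + S / c) \<le> x / (a / sqrt c)"
    by (rule divide_left_mono[OF den]) (use x a c S in \<open>auto intro!: mult_pos_pos divide_pos_pos add_pos_nonneg\<close>)
  also have "\<dots> = sqrt c * ((b - a) * (b + a) / a)" using xe by simp
  also have "(b - a) * (b + a) / a \<le> 3 * (b - a)"
  proof -
    have "(b - a) * (b + a) \<le> (b - a) * (3 * a)" using ab b2 by (intro mult_left_mono) auto
    then have "(b - a) * (b + a) / a \<le> (b - a) * (3 * a) / a" using a by (intro divide_right_mono) auto
    also have "\<dots> = 3 * (b - a)" using a by simp
    finally show ?thesis .
  qed
  then have "sqrt c * ((b - a) * (b + a) / a) \<le> sqrt c * (3 * (b - a))" using c by (intro mult_left_mono) auto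
  finally show ?thesis unfolding a_def b_def by (simp add: algebra_simps)
qed

lemma key_ineq:
  fixes x :: "nat \<Rightarrow> real" and B c :: real
  assumes c: "0 < c" and x1: "x 1 = B" and xb: "\<And>s. 1 \<le> s \<Longrightarrow> 0 \<le> x s \<and> x s \<le> B" and T: "1 \<le> T"
  shows "(\<Sum>t=1..T. x (t+1) / sqrt (1 + (\<Sum>s=1..t. x s) / c)) \<le> 6 * sqrt c * sqrt (\<Sum>s=1..T. x s)"
proof (cases "B = 0")
  case True
  then have z: "x s = 0" if "1 \<le> s" for s using xb[OF that] by simp
  then have "x (t+1) = 0" for t by simp
  moreover have "(\<Sum>s=1..T. x s) = 0" using z by simp
  ultimately show ?thesis by simp
next
  case False
  then have B: "0 < B" using xb[of 1] by simp
  define S where "S = (\<lambda>t. \<Sum>s=1..t. x s)"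
  have Ssuc: "S (Suc t) = S t + x (Suc t)" for t unfolding S_def by simp
  have Sge: "B \<le> S t" if "1 \<le> t" for t using that
  proof (induction t rule: dec_induct)
    case base then show ?case unfolding S_def using x1 by simp
  next
    case (step t) then show ?case using Ssuc[of t] xb[of "Suc t"] by simp
  qed
  have tel: "(\<Sum>t=1..n. x (t+1) / sqrt (1 + S t / c)) \<le> 3 * sqrt c * (sqrt (S (n+1)) - sqrt (S 1))" for n
  proof (induction n)
    case 0 then show ?case by simp
  next
    case (Suc n)
    have "x (n+2) / sqrt (1 + S (Suc n) / c) \<le> 3 * sqrt c * (sqrt (S (Suc n) + x (n+2)) - sqrt (S (Suc n)))"
      by (rule term_bound) (use xb[of "n+2"] Sge[of "Suc n"] B c in auto)
    also have "S (Suc n) + x (n+2) = S (n+2)" using Ssuc[of "Suc n"] by simp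
    finally have "x (n+2) / sqrt (1 + S (Suc n) / c) \<le> 3 * sqrt c * (sqrt (S (n+2)) - sqrt (S (Suc n)))" .
    then show ?case using Suc by (simp add: algebra_simps)
  qed
  have S1: "0 \<le> sqrt (S 1)" using Sge[of 1] B by simp
  have "S (T+1) \<le> 2 * S T" using Ssuc[of T] xb[of "Suc T"] Sge[OF T] by simp
  then have "sqrt (S (T+1)) \<le> sqrt (2 * S T)" by simp
  also have "sqrt (2 * S T) \<le> 2 * sqrt (S T)"
  proof -
    have "sqrt (2 * S T) = sqrt 2 * sqrt (S T)" by (simp add: real_sqrt_mult)
    moreover have "sqrt 2 \<le> (2::real)" by (rule real_le_lsqrt) auto
    ultimately show ?thesis using Sge[OF T] B by (simp add: mult_right_mono)
  qed
  finally have "sqrt (S (T+1)) \<le> 2 * sqrt (S T)" .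
  then have l1: "3 * sqrt c * sqrt (S (T+1)) \<le> 3 * sqrt c * (2 * sqrt (S T))"
    by (rule mult_left_mono) (use c in simp)
  have p: "0 \<le> 3 * sqrt c * sqrt (S 1)" using S1 c by simp
  have e: "3 * sqrt c * (sqrt (S (T+1)) - sqrt (S 1)) = 3 * sqrt c * sqrt (S (T+1)) - 3 * sqrt c * sqrt (S 1)"
    by (simp add: right_diff_distrib)
  have "3 * sqrt c * (2 * sqrt (S T)) = 6 * sqrt c * sqrt (S T)" by simp
  then have "3 * sqrt c * (sqrt (S (T+1)) - sqrt (S 1)) \<le> 6 * sqrt c * sqrt (S T)"
    using l1 p e by linarith
  then show ?thesis using tel[of T] unfolding S_def by simp
qed

lemma phi_nonpos: "0 \<le> y \<Longrightarrow> y \<le> 1 \<Longrightarrow> phi y \<le> 0"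
  unfolding phi_def by (auto intro!: mult_nonneg_nonpos simp: ln_le_zero_iff)

lemma ent_nonneg: "a \<in> convA K m \<Longrightarrow> 0 \<le> ent K a"
  unfolding ent_phi using phi_nonpos convA_bounds by (simp add: sum_nonpos)

definition beta1 :: "ctx measure \<Rightarrow> nat \<Rightarrow> nat \<Rightarrow> nat \<Rightarrow> nat \<Rightarrow> real" where
  "beta1 D d K m T = max (max 2 (cc2 D d K * ln (real T))) (cc1 D d K m T)"

definition Bm :: "ctx measure \<Rightarrow> nat \<Rightarrow> nat \<Rightarrow> nat \<Rightarrow> nat \<Rightarrow> real" where
  "Bm D d K m T = ent K (Psi K m (beta1 D d K m T) (\<lambda>_. 0))"

lemma Abar_t_1: "Abar_t D d K m T h 1 x = Psi K m (beta1 D d K m T) (\<lambda>_. 0)"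
proof -
  have "coef d [] x = (\<lambda>_. 0)" by (simp add: coef_def fun_eq_iff)
  then show ?thesis unfolding Abar_t_Psi by (simp add: beta_def betap_def beta1_def)
qed

lemma ent_le_Bm: "b \<in> convA K m \<Longrightarrow> ent K b \<le> Bm D d K m T"
proof -
  assume b: "b \<in> convA K m"
  have pos: "0 < beta1 D d K m T" unfolding beta1_def by simp
  have "Fo K (beta1 D d K m T) (\<lambda>_. 0) (Psi K m (beta1 D d K m T) (\<lambda>_. 0)) \<le> Fo K (beta1 D d K m T) (\<lambda>_. 0) b"
    using Psi_min b by blast
  then show ?thesis unfolding Fo_def Bm_def using pos by simp
qed

lemma Bm_pos: assumes "0 < K" "1 \<le> m" shows "0 < Bm D d K m T"
proof -
  have e0: "{} \<in> acts K m" and e1: "{0} \<in> acts K m" using assms by (auto simp: acts_def)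
  define a where "a = (\<lambda>k. (1 - 1/2) * avec {} k + 1/2 * avec {0} k)"
  have a: "a \<in> convA K m" unfolding a_def by (rule convA_comb[OF convA_avec[OF e0] convA_avec[OF e1]]) auto
  have "ent K a = - phi (1/2)"
  proof -
    have "(\<Sum>k<K. phi (a k)) = (\<Sum>k\<in>{0}. phi (a k))"
      by (rule sum.mono_neutral_right) (use assms in \<open>auto simp: a_def avec_def phi_def\<close>)
    then show ?thesis unfolding ent_phi by (simp add: a_def avec_def)
  qed
  also have "- phi (1/2) > 0" unfolding phi_def by (simp add: ln_div)
  finally show ?thesis using ent_le_Bm[OF a, of D d T] by simp
qed

lemma Abar_bp: "Abar K m d (1 / max (max 2 (cc2 D d K * ln (real T))) (fst (bp D d K m T h t))) (map snd (take t h)) (fst (h ! t))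
   = Abar_t D d K m T h (Suc t) (fst (h ! t))"
  unfolding Abar_t_def eta_def beta_def betap_def by simp

definition Hs :: "ctx measure \<Rightarrow> nat \<Rightarrow> nat \<Rightarrow> nat \<Rightarrow> nat \<Rightarrow> hist \<Rightarrow> nat \<Rightarrow> real" where
  "Hs D d K m T h s = ent K (Abar_t D d K m T h s (fst (h ! (s - 1))))"

lemma bp_snd: "snd (bp D d K m T h t) = (\<Sum>s=1..t. Hs D d K m T h s)"
  by (induction t) (simp_all add: Let_def Abar_bp Hs_def)

lemma bp_fst: "fst (bp D d K m T h (Suc t)) - fst (bp D d K m T h t) =
   cc1 D d K m T / sqrt (1 + snd (bp D d K m T h (Suc t)) / (real m * ln (real K / real m)))"
  by (simp add: Let_def)

lemma bp_prefix: "t \<le> length h \<Longrightarrow> bp D d K m T (h @ ys) t = bp D d K m T h t"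
  by (induction t) (simp_all add: Let_def nth_append)

lemma betap_prefix: "t - 1 \<le> length h \<Longrightarrow> betap D d K m T (h @ ys) t = betap D d K m T h t"
  unfolding betap_def by (simp add: bp_prefix)

lemma Abar_t_prefix: "t - 1 \<le> length h \<Longrightarrow> Abar_t D d K m T (h @ ys) t x = Abar_t D d K m T h t x"
  unfolding Abar_t_def eta_def beta_def by (simp add: betap_prefix)

definition Gs :: "ctx measure \<Rightarrow> nat \<Rightarrow> nat \<Rightarrow> nat \<Rightarrow> nat \<Rightarrow> hist \<Rightarrow> nat \<Rightarrow> ennreal" where
  "Gs D d K m T h s = (\<integral>\<^sup>+ x. ennreal (ent K (Abar_t D d K m T h s x)) \<partial>D)"

lemma Gs_prefix: "t - 1 \<le> length h \<Longrightarrow> Gs D d K m T (h @ ys) t = Gs D d K m T h t"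
  unfolding Gs_def by (simp add: Abar_t_prefix)

lemma id_HM: "(\<lambda>h. h) \<in> HM \<rightarrow>\<^sub>M HM" by simp

lemma Hs_meas: "(\<lambda>h. Hs D d K m T h s) \<in> borel_measurable HM"
  unfolding Hs_def by (rule ent_Abar_t_meas[OF id_HM]) simp

lemma bpf_meas: "(\<lambda>h. fst (bp D d K m T h t)) \<in> borel_measurable HM"
  using bp_meas[OF id_HM] by blast

lemma Gs_meas:
  fixes D :: "ctx measure"
  assumes cd: "context_dist d D"
  shows "(\<lambda>h. Gs D d K m T h s) \<in> borel_measurable HM"
proof -
  have pD: "prob_space D" and sD: "sets D = sets (\<Pi>\<^sub>M i\<in>{..<d}. lborel)" using cd unfolding context_dist_def by auto
  interpret D: prob_space D by (rule pD)
  have xc: "(\<lambda>\<omega>. snd \<omega> i) \<in> borel_measurable (HM \<Otimes>\<^sub>M D)" for i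
    by (rule measurable_compose[OF measurable_snd D_coord[OF sD]])
  have "(\<lambda>\<omega>. ent K (Abar_t D d K m T (fst \<omega>) s (snd \<omega>))) \<in> borel_measurable (HM \<Otimes>\<^sub>M D)"
    by (rule ent_Abar_t_meas[OF measurable_fst xc])
  then have "(\<lambda>(h, x). ennreal (ent K (Abar_t D d K m T h s x))) \<in> borel_measurable (HM \<Otimes>\<^sub>M D)"
    by (simp add: case_prod_beta')
  from D.borel_measurable_nn_integral[OF this] show ?thesis unfolding Gs_def by simp
qed

lemma tower:
  fixes D :: "ctx measure"
  assumes cd: "context_dist d D" and t: "1 \<le> t" "t \<le> T"
    and g: "\<And>h ys. length h = t - 1 \<Longrightarrow> g (h @ ys) = g h"
  shows "run D d K m T loss p T [] (\<lambda>h. g h * ennreal (Hs D d K m T h t)) = run D d K m T loss p T [] (\<lambda>h. g h * Gs D d K m T h t)"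
proof -
  have pD: "prob_space D" and sD: "sets D = sets (\<Pi>\<^sub>M i\<in>{..<d}. lborel)" using cd unfolding context_dist_def by auto
  interpret D: prob_space D by (rule pD)
  have Tsplit: "T = (t - 1) + Suc (T - t)" using t by simp
  have inner: "run D d K m T loss p (Suc (T - t)) h' (\<lambda>h. g h * ennreal (Hs D d K m T h t)) = g h' * Gs D d K m T h' t \<and>
     run D d K m T loss p (Suc (T - t)) h' (\<lambda>h. g h * Gs D d K m T h t) = g h' * Gs D d K m T h' t"
    if h': "length h' = t - 1" for h'
  proof -
    have st: "Suc (length h') = t" using h' t by simp
    have pre: "t - 1 \<le> length h'" using h' by simp
    have e1: "run D d K m T loss p (T - t) (h' @ [e]) (\<lambda>h. g h * ennreal (Hs D d K m T h t)) = g h' * ennreal (ent K (Abar_t D d K m T h' t (fst e)))" for e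
    proof -
      have "run D d K m T loss p (T - t) (h' @ [e]) (\<lambda>h. g h * ennreal (Hs D d K m T h t)) = g (h' @ [e]) * ennreal (Hs D d K m T (h' @ [e]) t)"
      proof (rule run_const_gen[OF pD])
        fix ys
        show "g ((h' @ [e]) @ ys) * ennreal (Hs D d K m T ((h' @ [e]) @ ys) t) = g (h' @ [e]) * ennreal (Hs D d K m T (h' @ [e]) t)"
          using g[OF h', of "e # ys"] g[OF h', of "[e]"] Abar_t_prefix[OF pre, of D d K m T "e # ys"] Abar_t_prefix[OF pre, of D d K m T "[e]"]
            h' t unfolding Hs_def by (simp add: nth_append)
      qed
      also have "\<dots> = g h' * ennreal (ent K (Abar_t D d K m T h' t (fst e)))"
        using g[OF h', of "[e]"] Abar_t_prefix[OF pre, of D d K m T "[e]"] h' t unfolding Hs_def by (simp add: nth_append)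
      finally show ?thesis .
    qed
    have e2: "run D d K m T loss p (T - t) (h' @ [e]) (\<lambda>h. g h * Gs D d K m T h t) = g h' * Gs D d K m T h' t" for e
    proof -
      have "run D d K m T loss p (T - t) (h' @ [e]) (\<lambda>h. g h * Gs D d K m T h t) = g (h' @ [e]) * Gs D d K m T (h' @ [e]) t"
      proof (rule run_const_gen[OF pD])
        fix ys
        show "g ((h' @ [e]) @ ys) * Gs D d K m T ((h' @ [e]) @ ys) t = g (h' @ [e]) * Gs D d K m T (h' @ [e]) t"
          using g[OF h', of "e # ys"] g[OF h', of "[e]"] Gs_prefix[OF pre, of D d K m T "e # ys"] Gs_prefix[OF pre, of D d K m T "[e]"]
          by simp
      qed
      also have "\<dots> = g h' * Gs D d K m T h' t"
        using g[OF h', of "[e]"] Gs_prefix[OF pre, of D d K m T "[e]"] by simp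
      finally show ?thesis .
    qed
    have xm: "(\<lambda>x. ennreal (ent K (Abar_t D d K m T h' t x))) \<in> borel_measurable D"
    proof -
      have "(\<lambda>x. ent K (Abar_t D d K m T ((\<lambda>_. h') x) t x)) \<in> borel_measurable D"
        by (rule ent_Abar_t_meas) (auto intro: D_coord[OF sD])
      then show ?thesis by simp
    qed
    have "run D d K m T loss p (Suc (T - t)) h' (\<lambda>h. g h * ennreal (Hs D d K m T h t)) = (\<integral>\<^sup>+ x. g h' * ennreal (ent K (Abar_t D d K m T h' t x)) \<partial>D)"
      unfolding run.simps Let_def st e1 using samp_const[OF pD] by (simp add: nn_integral_const)
    also have "\<dots> = g h' * Gs D d K m T h' t" unfolding Gs_def using xm by (simp add: nn_integral_cmult)
    finally have 1: "run D d K m T loss p (Suc (T - t)) h' (\<lambda>h. g h * ennreal (Hs D d K m T h t)) = g h' * Gs D d K m T h' t" .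
    have 2: "run D d K m T loss p (Suc (T - t)) h' (\<lambda>h. g h * Gs D d K m T h t) = g h' * Gs D d K m T h' t"
      unfolding run.simps Let_def st e2 using samp_const[OF pD] D.emeasure_space_1 by (simp add: nn_integral_const)
    show ?thesis using 1 2 by simp
  qed
  have "run D d K m T loss p T [] (\<lambda>h. g h * ennreal (Hs D d K m T h t)) =
      run D d K m T loss p (t - 1) [] (\<lambda>h'. run D d K m T loss p (Suc (T - t)) h' (\<lambda>h. g h * ennreal (Hs D d K m T h t)))"
    by (subst Tsplit) (rule run_split)
  also have "\<dots> = run D d K m T loss p (t - 1) [] (\<lambda>h'. run D d K m T loss p (Suc (T - t)) h' (\<lambda>h. g h * Gs D d K m T h t))"
    by (rule run_cong) (use inner in simp)
  also have "\<dots> = run D d K m T loss p T [] (\<lambda>h. g h * Gs D d K m T h t)"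
    by (subst (2) Tsplit) (rule run_split[symmetric])
  finally show ?thesis .
qed

lemma run_sum:
  fixes D :: "ctx measure"
  assumes cd: "context_dist d D" and lo: "losses_ok d K loss" and dec: "decomp_ok K m p"
    and K: "0 < K" and m: "1 \<le> m" and I: "finite I" and F: "\<And>i. i \<in> I \<Longrightarrow> F i \<in> borel_measurable HM"
  shows "run D d K m T loss p n h (\<lambda>h. \<Sum>i\<in>I. F i h) = (\<Sum>i\<in>I. run D d K m T loss p n h (F i))"
  using I F
proof (induction I rule: finite_induct)
  case empty
  have "prob_space D" using cd unfolding context_dist_def by auto
  then show ?case using run_const by simp
next
  case (insert i I)
  have "run D d K m T loss p n h (\<lambda>h. \<Sum>i\<in>insert i I. F i h) = run D d K m T loss p n h (\<lambda>h. 1 * F i h + (\<Sum>i\<in>I. F i h))"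
    using insert by simp
  also have "\<dots> = 1 * run D d K m T loss p n h (F i) + run D d K m T loss p n h (\<lambda>h. \<Sum>i\<in>I. F i h)"
    by (rule run_lin[OF cd lo dec K m]) (use insert in auto)
  also have "\<dots> = (\<Sum>i\<in>insert i I. run D d K m T loss p n h (F i))" using insert by simp
  finally show ?case .
qed

lemma w_eq: "1 \<le> t \<Longrightarrow> betap D d K m T h (t+1) - betap D d K m T h t =
   cc1 D d K m T / sqrt (1 + (\<Sum>s=1..t. Hs D d K m T h s) / (real m * ln (real K / real m)))"
  using bp_fst[of D d K m T h "t - 1"] bp_snd[of D d K m T h t] unfolding betap_def by simp

lemma w_prefix: "t \<le> length h \<Longrightarrow> betap D d K m T (h @ ys) (t+1) - betap D d K m T (h @ ys) t = betap D d K m T h (t+1) - betap D d K m T h t"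
  by (simp add: betap_prefix)

lemma Hs_bounds: "0 \<le> Hs D d K m T h s" "Hs D d K m T h s \<le> Bm D d K m T"
  unfolding Hs_def using ent_nonneg[OF Abar_t_convA] ent_le_Bm[OF Abar_t_convA] by auto

lemma Hs_1: "Hs D d K m T h 1 = Bm D d K m T"
  unfolding Hs_def Abar_t_1 Bm_def ..

lemma Gs_le: "prob_space D \<Longrightarrow> Gs D d K m T h s \<le> ennreal (Bm D d K m T)"
proof -
  assume pD: "prob_space D"
  have "Gs D d K m T h s \<le> (\<integral>\<^sup>+ x. ennreal (Bm D d K m T) \<partial>D)"
    unfolding Gs_def by (intro nn_integral_mono ennreal_leI ent_le_Bm Abar_t_convA)
  also have "\<dots> = ennreal (Bm D d K m T)" using prob_space.emeasure_space_1[OF pD] by (simp add: nn_integral_const)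
  finally show ?thesis .
qed

lemma Gs_1: "prob_space D \<Longrightarrow> Gs D d K m T h 1 = ennreal (Bm D d K m T)"
  unfolding Gs_def Abar_t_1 Bm_def[symmetric] by (simp add: nn_integral_const prob_space.emeasure_space_1)

lemma w_nonneg: "1 \<le> t \<Longrightarrow> 0 \<le> cc1 D d K m T \<Longrightarrow> 0 < real m * ln (real K / real m) \<Longrightarrow> 0 \<le> betap D d K m T h (t+1) - betap D d K m T h t"
  unfolding w_eq by (intro divide_nonneg_nonneg real_sqrt_ge_zero add_nonneg_nonneg sum_nonneg Hs_bounds) auto

lemma pointwise:
  fixes D :: "ctx measure" and K m :: nat
  defines "c \<equiv> real m * ln (real K / real m)"
  assumes pD: "prob_space D" and c: "0 < c" and T: "1 \<le> T" and c1: "0 \<le> cc1 D d K m T"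
  shows "(\<Sum>t\<in>{1..T-1}. ennreal (betap D d K m T h (t+1) - betap D d K m T h t) * ennreal (Hs D d K m T h (t+1)))
     + ennreal (betap D d K m T h (T+1) - betap D d K m T h T) * Gs D d K m T h (T+1)
     \<le> ennreal (6 * cc1 D d K m T * sqrt c * sqrt (\<Sum>s=1..T. Hs D d K m T h s))"
proof -
  define w where "w = (\<lambda>t. betap D d K m T h (t+1) - betap D d K m T h t)"
  define B where "B = Bm D d K m T"
  define x where "x = (\<lambda>s. if s \<le> T then Hs D d K m T h s else B)"
  have w0: "1 \<le> t \<Longrightarrow> 0 \<le> w t" for t unfolding w_def by (rule w_nonneg[OF _ c1 c[unfolded c_def]])
  have H0: "0 \<le> Hs D d K m T h s" "Hs D d K m T h s \<le> B" for s unfolding B_def by (rule Hs_bounds)+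
  have "(\<Sum>t\<in>{1..T-1}. ennreal (w t) * ennreal (Hs D d K m T h (t+1))) + ennreal (w T) * Gs D d K m T h (T+1)
      \<le> (\<Sum>t\<in>{1..T-1}. ennreal (w t * Hs D d K m T h (t+1))) + ennreal (w T * B)"
  proof -
    have "ennreal (w T) * Gs D d K m T h (T+1) \<le> ennreal (w T) * ennreal B"
      unfolding B_def by (intro mult_left_mono Gs_le[OF pD]) auto
    also have "ennreal (w T) * ennreal B = ennreal (w T * B)"
      using w0[OF T] H0(1)[of 1] H0(2)[of 1] by (simp add: ennreal_mult)
    finally have l: "ennreal (w T) * Gs D d K m T h (T+1) \<le> ennreal (w T * B)" .
    have "(\<Sum>t\<in>{1..T-1}. ennreal (w t) * ennreal (Hs D d K m T h (t+1))) = (\<Sum>t\<in>{1..T-1}. ennreal (w t * Hs D d K m T h (t+1)))"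
      using w0 H0 by (intro sum.cong) (auto simp: ennreal_mult)
    then show ?thesis using l by (simp add: add_left_mono)
  qed
  also have "\<dots> = ennreal ((\<Sum>t\<in>{1..T-1}. w t * Hs D d K m T h (t+1)) + w T * B)"
  proof -
    have nn: "0 \<le> w t * Hs D d K m T h (t+1)" if "t \<in> {1..T-1}" for t
      using w0[of t] H0(1)[of "t+1"] that by (auto intro: mult_nonneg_nonneg)
    have s: "(\<Sum>t\<in>{1..T-1}. ennreal (w t * Hs D d K m T h (t+1))) = ennreal (\<Sum>t\<in>{1..T-1}. w t * Hs D d K m T h (t+1))"
      by (rule sum_ennreal) (rule nn)
    have "0 \<le> (\<Sum>t\<in>{1..T-1}. w t * Hs D d K m T h (t+1))" using nn by (rule sum_nonneg)
    moreover have "0 \<le> w T * B" using w0[OF T] H0(1)[of 1] H0(2)[of 1] by simp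
    ultimately show ?thesis unfolding s by (simp add: ennreal_plus)
  qed
  also have "(\<Sum>t\<in>{1..T-1}. w t * Hs D d K m T h (t+1)) + w T * B = (\<Sum>t=1..T. w t * x (t+1))"
  proof -
    have "{1..T} = insert T {1..T-1}" using T by auto
    moreover have "T \<notin> {1..T-1}" using T by auto
    ultimately have "(\<Sum>t=1..T. w t * x (t+1)) = w T * x (T+1) + (\<Sum>t\<in>{1..T-1}. w t * x (t+1))" by simp
    also have "(\<Sum>t\<in>{1..T-1}. w t * x (t+1)) = (\<Sum>t\<in>{1..T-1}. w t * Hs D d K m T h (t+1))"
      by (intro sum.cong) (auto simp: x_def)
    finally show ?thesis by (simp add: x_def)
  qed
  also have "(\<Sum>t=1..T. w t * x (t+1)) = cc1 D d K m T * (\<Sum>t=1..T. x (t+1) / sqrt (1 + (\<Sum>s=1..t. x s) / c))"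
  proof -
    have "w t * x (t+1) = cc1 D d K m T * (x (t+1) / sqrt (1 + (\<Sum>s=1..t. x s) / c))" if "t \<in> {1..T}" for t
    proof -
      have "(\<Sum>s=1..t. x s) = (\<Sum>s=1..t. Hs D d K m T h s)" using that by (intro sum.cong) (auto simp: x_def)
      then show ?thesis unfolding w_def using w_eq[of t D d K m T h] that by (simp add: c_def)
    qed
    then show ?thesis by (simp add: sum_distrib_left)
  qed
  also have "\<dots> \<le> cc1 D d K m T * (6 * sqrt c * sqrt (\<Sum>s=1..T. x s))"
  proof (rule mult_left_mono[OF key_ineq[OF c _ _ T] c1])
    show "x 1 = B" unfolding x_def using Hs_1 T B_def by simp
    show "0 \<le> x s \<and> x s \<le> B" if "1 \<le> s" for s
    proof -
      have "0 \<le> B" using H0(1)[of 1] H0(2)[of 1] by linarith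
      then show ?thesis using H0 unfolding x_def by auto
    qed
  qed
  also have "(\<Sum>s=1..T. x s) = (\<Sum>s=1..T. Hs D d K m T h s)" by (intro sum.cong) (auto simp: x_def)
  finally show ?thesis unfolding w_def using ennreal_leI by (auto simp: mult_ac)
qed

lemma betap_meas: "(\<lambda>h. betap D d K m T h t) \<in> borel_measurable HM"
  unfolding betap_def by (rule bpf_meas)

lemma sqrt_amgm: assumes "0 < a" "0 \<le> S" shows "sqrt S \<le> S / (2 * a) + a / 2"
proof -
  have "0 \<le> (sqrt S - a)^2" by simp
  then have "2 * a * sqrt S \<le> S + a^2" using assms by (simp add: power2_eq_square algebra_simps)
  then have "sqrt S \<le> (S + a^2) / (2 * a)" using assms by (simp add: field_simps)
  also have "\<dots> = S / (2 * a) + a / 2" using assms by (simp add: field_simps power2_eq_square)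
  finally show ?thesis .
qed

theorem lemmaA5:
  shows "\<exists>L'>0. \<forall>(K::nat) (m::nat) (d::nat) (T::nat) (D::ctx measure) loss p.
     2 \<le> K \<longrightarrow> 1 \<le> m \<longrightarrow> m < K \<longrightarrow> 1 \<le> d \<longrightarrow> 3 \<le> T \<longrightarrow>
     context_dist d D \<longrightarrow> losses_ok d K loss \<longrightarrow> decomp_ok K m p \<longrightarrow>
     cc1 D d K m T \<ge> 1 \<longrightarrow>
     run D d K m T loss p T []
        (\<lambda>h. \<integral>\<^sup>+ x0. ennreal (\<Sum>t=1..T. (betap D d K m T h (t + 1) - betap D d K m T h t)
                                      * ent K (Abar_t D d K m T h (t + 1) x0)) \<partial>D)
     \<le> ennreal (L' * cc1 D d K m T * sqrt (real m * ln (real K / real m))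
          * sqrt (\<Sum>t=1..T. enn2real (run D d K m T loss p T []
                     (\<lambda>h. \<integral>\<^sup>+ x0. ennreal (ent K (Abar_t D d K m T h t x0)) \<partial>D))))"
proof (rule exI[of _ 6], intro conjI allI impI)
  show "(0::real) < 6" by simp
  fix K m d T :: nat and D :: "ctx measure" and loss :: "nat \<Rightarrow> ctx \<Rightarrow> nat \<Rightarrow> real" and p :: "nat \<Rightarrow> (nat \<Rightarrow> real) \<Rightarrow> nat set pmf"
  assume K2: "2 \<le> K" and m1: "1 \<le> m" and mK: "m < K" and d1: "1 \<le> d" and T3: "3 \<le> T"
    and cd: "context_dist d D" and lo: "losses_ok d K loss" and dec: "decomp_ok K m p" and c1ge: "1 \<le> cc1 D d K m T"
  have K: "0 < K" using K2 by simp
  have T: "1 \<le> T" using T3 by simp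
  have pD: "prob_space D" and sD: "sets D = sets (\<Pi>\<^sub>M i\<in>{..<d}. lborel)" using cd unfolding context_dist_def by auto
  interpret D: prob_space D by (rule pD)
  define c where "c = real m * ln (real K / real m)"
  have c: "0 < c" unfolding c_def using m1 mK by (auto intro!: mult_pos_pos ln_gt_zero simp: field_simps)
  define c1 where "c1 = cc1 D d K m T"
  have c1: "0 \<le> c1" using c1ge unfolding c1_def by simp
  define B where "B = Bm D d K m T"
  have B: "0 < B" unfolding B_def using Bm_pos[OF K m1] .
  define r where "r = run D d K m T loss p T []"
  define w where "w = (\<lambda>t h. betap D d K m T h (t+1) - betap D d K m T h t)"
  have w0: "1 \<le> t \<Longrightarrow> 0 \<le> w t h" for t h unfolding w_def by (rule w_nonneg[OF _ c1[unfolded c1_def] c[unfolded c_def]])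
  have wm: "(\<lambda>h. w t h) \<in> borel_measurable HM" for t unfolding w_def by (intro borel_measurable_diff betap_meas)
  have xent: "(\<lambda>x. ennreal (ent K (Abar_t D d K m T h s x))) \<in> borel_measurable D" for h s
  proof -
    have "(\<lambda>x. ent K (Abar_t D d K m T ((\<lambda>_. h) x) s x)) \<in> borel_measurable D"
      by (rule ent_Abar_t_meas) (auto intro: D_coord[OF sD])
    then show ?thesis by simp
  qed
  have entnn: "0 \<le> ent K (Abar_t D d K m T h s x)" for h s x by (rule ent_nonneg[OF Abar_t_convA])
  have Gsm: "(\<lambda>h. Gs D d K m T h s) \<in> borel_measurable HM" for s by (rule Gs_meas[OF cd])
  have Hsm: "(\<lambda>h. ennreal (Hs D d K m T h s)) \<in> borel_measurable HM" for s
    using measurable_compose[OF Hs_meas measurable_ennreal] by simp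
  have ew: "(\<lambda>h. ennreal (w t h)) \<in> borel_measurable HM" for t
    using measurable_compose[OF wm measurable_ennreal] by simp
  have stepA: "(\<integral>\<^sup>+ x0. ennreal (\<Sum>t=1..T. (betap D d K m T h (t + 1) - betap D d K m T h t)
                                      * ent K (Abar_t D d K m T h (t + 1) x0)) \<partial>D)
      = (\<Sum>t=1..T. ennreal (w t h) * Gs D d K m T h (t+1))" for h
  proof -
    have "(\<integral>\<^sup>+ x0. ennreal (\<Sum>t=1..T. (betap D d K m T h (t + 1) - betap D d K m T h t)
                                      * ent K (Abar_t D d K m T h (t + 1) x0)) \<partial>D)
        = (\<integral>\<^sup>+ x0. (\<Sum>t=1..T. ennreal (w t h) * ennreal (ent K (Abar_t D d K m T h (t + 1) x0))) \<partial>D)"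
    proof (rule nn_integral_cong)
      fix x0
      have "ennreal (\<Sum>t=1..T. w t h * ent K (Abar_t D d K m T h (t + 1) x0)) = (\<Sum>t=1..T. ennreal (w t h * ent K (Abar_t D d K m T h (t + 1) x0)))"
        by (rule sum_ennreal[symmetric]) (use w0 entnn in \<open>auto intro: mult_nonneg_nonneg\<close>)
      also have "\<dots> = (\<Sum>t=1..T. ennreal (w t h) * ennreal (ent K (Abar_t D d K m T h (t + 1) x0)))"
        by (intro sum.cong refl ennreal_mult) (use w0 entnn in auto)
      finally show "ennreal (\<Sum>t=1..T. (betap D d K m T h (t + 1) - betap D d K m T h t) * ent K (Abar_t D d K m T h (t + 1) x0))
          = (\<Sum>t=1..T. ennreal (w t h) * ennreal (ent K (Abar_t D d K m T h (t + 1) x0)))" unfolding w_def .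
    qed
    also have "\<dots> = (\<Sum>t=1..T. (\<integral>\<^sup>+ x0. ennreal (w t h) * ennreal (ent K (Abar_t D d K m T h (t + 1) x0)) \<partial>D))"
      by (rule nn_integral_sum) (use xent in simp)
    also have "\<dots> = (\<Sum>t=1..T. ennreal (w t h) * Gs D d K m T h (t+1))"
      unfolding Gs_def by (intro sum.cong refl nn_integral_cmult xent)
    finally show ?thesis .
  qed
  show "run D d K m T loss p T []
        (\<lambda>h. \<integral>\<^sup>+ x0. ennreal (\<Sum>t=1..T. (betap D d K m T h (t + 1) - betap D d K m T h t)
                                      * ent K (Abar_t D d K m T h (t + 1) x0)) \<partial>D)
     \<le> ennreal (6 * cc1 D d K m T * sqrt (real m * ln (real K / real m))
          * sqrt (\<Sum>t=1..T. enn2real (run D d K m T loss p T []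
                     (\<lambda>h. \<integral>\<^sup>+ x0. ennreal (ent K (Abar_t D d K m T h t x0)) \<partial>D))))"
  proof -
    have Gs_alt: "(\<lambda>h. \<integral>\<^sup>+ x0. ennreal (ent K (Abar_t D d K m T h t x0)) \<partial>D) = (\<lambda>h. Gs D d K m T h t)" for t
      unfolding Gs_def ..
    define Q where "Q = (\<Sum>t=1..T. enn2real (r (\<lambda>h. Gs D d K m T h t)))"
    have rGs_le: "r (\<lambda>h. Gs D d K m T h s) \<le> ennreal B" for s
    proof -
      have "r (\<lambda>h. Gs D d K m T h s) \<le> r (\<lambda>h. ennreal B)" unfolding r_def B_def by (intro run_mono Gs_le[OF pD])
      also have "\<dots> = ennreal B" unfolding r_def by (rule run_const[OF pD])
      finally show ?thesis .
    qed
    have rGs_eq: "r (\<lambda>h. Gs D d K m T h s) = ennreal (enn2real (r (\<lambda>h. Gs D d K m T h s)))" for s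
      using rGs_le[of s] by (simp add: ennreal_enn2real_if) (metis ennreal_neq_top neq_top_trans)
    have rGs1: "r (\<lambda>h. Gs D d K m T h 1) = ennreal B"
      unfolding r_def B_def Gs_1[OF pD] by (rule run_const[OF pD])
    have BQ: "B \<le> Q"
    proof -
      have "enn2real (r (\<lambda>h. Gs D d K m T h 1)) \<le> Q" unfolding Q_def
        by (rule member_le_sum[where f="\<lambda>t. enn2real (r (\<lambda>h. Gs D d K m T h t))"]) (use T in auto)
      then show ?thesis using rGs1 B by simp
    qed
    have Qpos: "0 < Q" using B BQ by simp
    define a where "a = sqrt Q"
    have a: "0 < a" unfolding a_def using Qpos by simp
    define \<alpha> where "\<alpha> = 6 * c1 * sqrt c / (2 * a)"
    define \<beta> where "\<beta> = 6 * c1 * sqrt c * a / 2"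
    have \<alpha>0: "0 \<le> \<alpha>" unfolding \<alpha>_def using c1 c a by simp
    have \<beta>0: "0 \<le> \<beta>" unfolding \<beta>_def using c1 c a by simp
    have "r (\<lambda>h. \<integral>\<^sup>+ x0. ennreal (\<Sum>t=1..T. (betap D d K m T h (t + 1) - betap D d K m T h t)
                                      * ent K (Abar_t D d K m T h (t + 1) x0)) \<partial>D)
        = r (\<lambda>h. \<Sum>t=1..T. ennreal (w t h) * Gs D d K m T h (t+1))" unfolding stepA ..
    also have "\<dots> = (\<Sum>t=1..T. r (\<lambda>h. ennreal (w t h) * Gs D d K m T h (t+1)))"
      unfolding r_def by (rule run_sum[OF cd lo dec K m1]) (simp_all add: borel_measurable_times_ennreal ew Gsm)
    also have "\<dots> = (\<Sum>t\<in>{1..T-1}. r (\<lambda>h. ennreal (w t h) * ennreal (Hs D d K m T h (t+1)))) + r (\<lambda>h. ennreal (w T h) * Gs D d K m T h (T+1))"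
    proof -
      have "{1..T} = insert T {1..T-1}" using T by auto
      moreover have "T \<notin> {1..T-1}" using T by auto
      ultimately have "(\<Sum>t=1..T. r (\<lambda>h. ennreal (w t h) * Gs D d K m T h (t+1))) =
          r (\<lambda>h. ennreal (w T h) * Gs D d K m T h (T+1)) + (\<Sum>t\<in>{1..T-1}. r (\<lambda>h. ennreal (w t h) * Gs D d K m T h (t+1)))" by simp
      also have "(\<Sum>t\<in>{1..T-1}. r (\<lambda>h. ennreal (w t h) * Gs D d K m T h (t+1))) = (\<Sum>t\<in>{1..T-1}. r (\<lambda>h. ennreal (w t h) * ennreal (Hs D d K m T h (t+1))))"
      proof (rule sum.cong[OF refl])
        fix t assume t: "t \<in> {1..T-1}"
        show "r (\<lambda>h. ennreal (w t h) * Gs D d K m T h (t+1)) = r (\<lambda>h. ennreal (w t h) * ennreal (Hs D d K m T h (t+1)))"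
          unfolding r_def
        proof (rule tower[OF cd, symmetric])
          show "1 \<le> t + 1" "t + 1 \<le> T" using t by auto
          fix h ys :: hist assume "length h = t + 1 - 1"
          then show "ennreal (w t (h @ ys)) = ennreal (w t h)" unfolding w_def using w_prefix[of t h] by simp
        qed
      qed
      finally show ?thesis by (simp only: add.commute)
    qed
    also have "\<dots> = r (\<lambda>h. 1 * (\<Sum>t\<in>{1..T-1}. ennreal (w t h) * ennreal (Hs D d K m T h (t+1))) + ennreal (w T h) * Gs D d K m T h (T+1))"
    proof -
      have "r (\<lambda>h. 1 * (\<Sum>t\<in>{1..T-1}. ennreal (w t h) * ennreal (Hs D d K m T h (t+1))) + ennreal (w T h) * Gs D d K m T h (T+1))
        = 1 * r (\<lambda>h. \<Sum>t\<in>{1..T-1}. ennreal (w t h) * ennreal (Hs D d K m T h (t+1))) + r (\<lambda>h. ennreal (w T h) * Gs D d K m T h (T+1))"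
        unfolding r_def by (rule run_lin[OF cd lo dec K m1]) (intro borel_measurable_sum borel_measurable_times_ennreal ew Hsm Gsm)+
      also have "r (\<lambda>h. \<Sum>t\<in>{1..T-1}. ennreal (w t h) * ennreal (Hs D d K m T h (t+1))) = (\<Sum>t\<in>{1..T-1}. r (\<lambda>h. ennreal (w t h) * ennreal (Hs D d K m T h (t+1))))"
        unfolding r_def by (rule run_sum[OF cd lo dec K m1]) (simp_all add: borel_measurable_times_ennreal ew Hsm)
      finally show ?thesis by simp
    qed
    also have "\<dots> \<le> r (\<lambda>h. ennreal (6 * c1 * sqrt c * sqrt (\<Sum>s=1..T. Hs D d K m T h s)))"
      unfolding r_def
    proof (rule run_mono)
      fix h
      show "1 * (\<Sum>t\<in>{1..T-1}. ennreal (w t h) * ennreal (Hs D d K m T h (t+1))) + ennreal (w T h) * Gs D d K m T h (T+1)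
          \<le> ennreal (6 * c1 * sqrt c * sqrt (\<Sum>s=1..T. Hs D d K m T h s))"
        using pointwise[OF pD c[unfolded c_def] T c1[unfolded c1_def], of h] unfolding w_def c_def c1_def by simp
    qed
    also have "\<dots> \<le> r (\<lambda>h. ennreal \<alpha> * (\<Sum>s=1..T. ennreal (Hs D d K m T h s)) + ennreal \<beta>)"
      unfolding r_def
    proof (rule run_mono)
      fix h
      have S0: "0 \<le> (\<Sum>s=1..T. Hs D d K m T h s)" by (intro sum_nonneg Hs_bounds)
      have "6 * c1 * sqrt c * sqrt (\<Sum>s=1..T. Hs D d K m T h s) \<le> 6 * c1 * sqrt c * ((\<Sum>s=1..T. Hs D d K m T h s) / (2 * a) + a / 2)"
        by (rule mult_left_mono[OF sqrt_amgm[OF a S0]]) (use c1 c in simp)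
      also have "\<dots> = \<alpha> * (\<Sum>s=1..T. Hs D d K m T h s) + \<beta>" unfolding \<alpha>_def \<beta>_def by (simp add: field_simps)
      finally have "ennreal (6 * c1 * sqrt c * sqrt (\<Sum>s=1..T. Hs D d K m T h s)) \<le> ennreal (\<alpha> * (\<Sum>s=1..T. Hs D d K m T h s) + \<beta>)"
        by (rule ennreal_leI)
      also have "\<dots> = ennreal \<alpha> * (\<Sum>s=1..T. ennreal (Hs D d K m T h s)) + ennreal \<beta>"
        using \<alpha>0 \<beta>0 S0 by (simp add: ennreal_plus ennreal_mult sum_ennreal Hs_bounds)
      finally show "ennreal (6 * c1 * sqrt c * sqrt (\<Sum>s=1..T. Hs D d K m T h s)) \<le> ennreal \<alpha> * (\<Sum>s=1..T. ennreal (Hs D d K m T h s)) + ennreal \<beta>" .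
    qed
    also have "\<dots> = ennreal \<alpha> * (\<Sum>s=1..T. r (\<lambda>h. ennreal (Hs D d K m T h s))) + ennreal \<beta>"
    proof -
      have "r (\<lambda>h. ennreal \<alpha> * (\<Sum>s=1..T. ennreal (Hs D d K m T h s)) + ennreal \<beta>) = ennreal \<alpha> * r (\<lambda>h. \<Sum>s=1..T. ennreal (Hs D d K m T h s)) + r (\<lambda>h. ennreal \<beta>)"
        unfolding r_def by (rule run_lin[OF cd lo dec K m1]) (intro borel_measurable_sum Hsm, simp)
      also have "r (\<lambda>h. ennreal \<beta>) = ennreal \<beta>" unfolding r_def by (rule run_const[OF pD])
      also have "r (\<lambda>h. \<Sum>s=1..T. ennreal (Hs D d K m T h s)) = (\<Sum>s=1..T. r (\<lambda>h. ennreal (Hs D d K m T h s)))"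
        unfolding r_def by (rule run_sum[OF cd lo dec K m1]) (simp_all add: Hsm)
      finally show ?thesis .
    qed
    also have "(\<Sum>s=1..T. r (\<lambda>h. ennreal (Hs D d K m T h s))) = (\<Sum>s=1..T. r (\<lambda>h. Gs D d K m T h s))"
    proof (rule sum.cong[OF refl])
      fix s assume s: "s \<in> {1..T}"
      have "r (\<lambda>h. 1 * ennreal (Hs D d K m T h s)) = r (\<lambda>h. 1 * Gs D d K m T h s)"
        unfolding r_def by (rule tower[OF cd]) (use s in auto)
      then show "r (\<lambda>h. ennreal (Hs D d K m T h s)) = r (\<lambda>h. Gs D d K m T h s)" by simp
    qed
    also have "(\<Sum>s=1..T. r (\<lambda>h. Gs D d K m T h s)) = ennreal Q"
    proof -
      have "(\<Sum>s=1..T. r (\<lambda>h. Gs D d K m T h s)) = (\<Sum>s=1..T. ennreal (enn2real (r (\<lambda>h. Gs D d K m T h s))))"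
        using rGs_eq by (intro sum.cong) auto
      also have "\<dots> = ennreal Q" unfolding Q_def by (rule sum_ennreal) simp
      finally show ?thesis .
    qed
    also have "ennreal \<alpha> * ennreal Q + ennreal \<beta> = ennreal (6 * c1 * sqrt c * sqrt Q)"
    proof -
      have "\<alpha> * Q + \<beta> = 6 * c1 * sqrt c * sqrt Q"
      proof -
        have "Q = a * a" unfolding a_def using Qpos by simp
        then show ?thesis unfolding \<alpha>_def \<beta>_def a_def[symmetric] using a by (simp add: field_simps)
      qed
      then show ?thesis using \<alpha>0 \<beta>0 Qpos by (simp add: ennreal_plus[symmetric] ennreal_mult[symmetric])
    qed
    finally show ?thesis unfolding r_def Gs_alt Q_def c_def c1_def by simp
  qed
qed

end
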